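(* Let $t(\lambda_-)=u\,s_{\ell_1}\cdots s_{\ell_L}$ be the reduced expression determined by the order $\prec'$ as described in the context, and let $M=\ell(v(\lambda_-))$. Then $u\,s_{\ell_{M+1}}\cdots s_{\ell_L}$ is a reduced expression for $m_\lambda$, the shortest element of the coset $t(\lambda)W$. Moreover, if for $1\le k\le M$ we write $u s_{\ell_k}=s_{i'_k}u$, then $i'_k=i_k$, where $w_\circ=s_{i_1}\cdots s_{i_N}$ is the fixed reduced expression.
   Context: Setting: $\mathfrak g$ finite-dimensional simple Lie algebra, simple roots $\{\alpha_i\}_{i\in I}$, simple coroots $\{\alpha_i^\vee\}$, roots $\Delta=\Delta^+\sqcup\Delta^-$, weights $P$, dominant weights $P^+$, Weyl group $W$, longest element $w_\circ$. For $\lambda\in P^+$: $S=\{i:\langle\lambda,\alpha_i^\vee\rangle=0\}$, $W_S=\langle s_i:i\in S\rangle$ with longest element $w_\circ^S$, $\Delta^+_S$ the positive roots in $\sum_{i\in S}\mathbb Z\alpha_i$; $\lambda_-=w_\circ\lambda$; $v(\lambda_-)$ the minimal-length element of $\{x\in W: x\lambda=\lambda_-\}$, so $w_\circ=v(\lambda_-)w_\circ^S$ with lengths adding. Fix reduced expressions $v(\lambda_-)=s_{i_1}\cdots s_{i_M}$ and $w_\circ^S=s_{i_{M+1}}\cdots s_{i_N}$, so $w_\circ=s_{i_1}\cdots s_{i_N}$ is reduced; put $\beta_j=s_{i_N}\cdots s_{i_{j+1}}\alpha_{i_j}$; then $\Delta^+\setminus\Delta^+_S=\{\beta_1,\dots,\beta_M\}$,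 $\Delta^+_S=\{\beta_{M+1},\dots,\beta_N\}$, and the total order $\prec$ on $\Delta^+$ is $\beta_1\succ\beta_2\succ\dots\succ\beta_N$. Affine: real roots of the untwisted affinization of the dual root system $\widetilde\Delta_{\rm aff}=\{\alpha^\vee+a\tilde\delta\}$, positive ones $\widetilde\Delta^+_{\rm aff}$ ($a>0$, or $a=0,\alpha\in\Delta^+$), $\widetilde\Delta^-_{\rm aff}=-\widetilde\Delta^+_{\rm aff}$; simple roots $\alpha_i^\vee$ ($i\in I$), $\alpha_0^\vee=\tilde\delta-\varphi^\vee$ ($\varphi$ highest short root), $I_{\rm aff}=I\sqcup\{0\}$; $\beta=\bar\beta+\deg(\beta)\tilde\delta$. $W_{\rm ext}=t(P)\rtimes W$ acting by $v\,t(\nu)(\bar\beta+r\tilde\delta)=v\bar\beta+(r-\langle\nu,\bar\beta\rangle)\tilde\delta$; $\ell(x)=\#(\widetilde\Delta^+_{\rm aff}\cap x^{-1}\widetilde\Delta^-_{\rm aff})$; $\Omega$ the length-zero elements; $W_{\rm ext}=\Omega\ltimes\langle s_i:i\in I_{\rm aff}\rangle$. The map $\Phi:\widetilde\Delta^+_{\rm aff}\cap t(\lambda_-)^{-1}\widetilde\Delta^-_{\rm aff}\to\mathbb Q_{\ge0}\times(\Delta^+\setminus\Delta^+_S)$, $\Phi(\beta)=\Big(\frac{\langle\lambda_-,\bar\beta\rangle-\deg(\beta)}{\langle\lambda_-,\bar\beta\rangle},\,w_\circ(\bar\beta)^\vee\Big)$ (where $(\alpha^\vee)^\vee=\alpha$)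 is injective. Order the target lexicographically: $(a,\alpha)<(b,\beta)$ iff $a<b$, or $a=b$ and $\alpha\succ\beta$; $\prec'$ is the pullback order. The reduced expression $t(\lambda_-)=u\,s_{\ell_1}\cdots s_{\ell_L}$ ($u\in\Omega$, $\ell_k\in I_{\rm aff}$) is the unique one with $\tilde\beta_j:=s_{\ell_L}\cdots s_{\ell_{j+1}}\alpha^\vee_{\ell_j}$ satisfying $\tilde\beta_1\prec'\dots\prec'\tilde\beta_L$ exhausting $\widetilde\Delta^+_{\rm aff}\cap t(\lambda_-)^{-1}\widetilde\Delta^-_{\rm aff}$. *)

theory Defs
  imports "HOL-Analysis.Analysis"
begin

definition coroot :: "'a::euclidean_space \<Rightarrow> 'a" where
  "coroot \<alpha> = (2 / (\<alpha> \<bullet> \<alpha>)) *\<^sub>R \<alpha>"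

definition refl :: "'a::euclidean_space \<Rightarrow> 'a \<Rightarrow> 'a" where
  "refl \<alpha> x = x - (x \<bullet> coroot \<alpha>) *\<^sub>R \<alpha>"

definition root_system :: "'a::euclidean_space set \<Rightarrow> bool" where
  "root_system R \<longleftrightarrow> finite R \<and> 0 \<notin> R \<and> span R = UNIV \<and>
     (\<forall>\<alpha>\<in>R. \<forall>\<beta>\<in>R. refl \<alpha> \<beta> \<in> R) \<and>
     (\<forall>\<alpha>\<in>R. \<forall>\<beta>\<in>R. \<beta> \<bullet> coroot \<alpha> \<in> \<int>) \<and>
     (\<forall>\<alpha>\<in>R. \<forall>c::real. c *\<^sub>R \<alpha> \<in> R \<longrightarrow> c = 1 \<or> c = -1)"

definition irreducible_rs :: "'a::euclidean_space set \<Rightarrow> bool" where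
  "irreducible_rs R \<longleftrightarrow> \<not> (\<exists>A B. A \<noteq> {} \<and> B \<noteq> {} \<and> A \<union> B = R \<and> A \<inter> B = {} \<and>
       (\<forall>\<alpha>\<in>A. \<forall>\<beta>\<in>B. \<alpha> \<bullet> \<beta> = 0))"

definition nonneg_comb :: "('i::finite \<Rightarrow> 'a::euclidean_space) \<Rightarrow> 'a \<Rightarrow> bool" where
  "nonneg_comb simple x \<longleftrightarrow> (\<exists>c::'i \<Rightarrow> nat. x = (\<Sum>i\<in>UNIV. real (c i) *\<^sub>R simple i))"

definition pos_roots :: "'a::euclidean_space set \<Rightarrow> ('i::finite \<Rightarrow> 'a) \<Rightarrow> 'a set" where
  "pos_roots R simple = {\<alpha> \<in> R. nonneg_comb simple \<alpha>}"

definition simple_system :: "'a::euclidean_space set \<Rightarrow> ('i::finite \<Rightarrow> 'a) \<Rightarrow> bool" where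
  "simple_system R simple \<longleftrightarrow> inj simple \<and> range simple \<subseteq> R \<and> independent (range simple) \<and>
     (\<forall>\<alpha>\<in>R. \<alpha> \<in> pos_roots R simple \<or> - \<alpha> \<in> pos_roots R simple)"

definition highest_short_root :: "'a::euclidean_space set \<Rightarrow> ('i::finite \<Rightarrow> 'a) \<Rightarrow> 'a \<Rightarrow> bool" where
  "highest_short_root R simple \<phi> \<longleftrightarrow> \<phi> \<in> R \<and> (\<forall>\<beta>\<in>R. \<phi> \<bullet> \<phi> \<le> \<beta> \<bullet> \<beta>) \<and>
     (\<forall>\<beta>\<in>R. \<beta> \<bullet> \<beta> = \<phi> \<bullet> \<phi> \<longrightarrow> nonneg_comb simple (\<phi> - \<beta>))"

definition weights :: "'a::euclidean_space set \<Rightarrow> 'a set" where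
  "weights R = {\<nu>. \<forall>\<alpha>\<in>R. \<nu> \<bullet> coroot \<alpha> \<in> \<int>}"

definition dominant_weights :: "'a::euclidean_space set \<Rightarrow> ('i::finite \<Rightarrow> 'a) \<Rightarrow> 'a set" where
  "dominant_weights R simple = {lam \<in> weights R. \<forall>i. lam \<bullet> coroot (simple i) \<ge> 0}"

definition word :: "('i \<Rightarrow> 'a::euclidean_space) \<Rightarrow> 'i list \<Rightarrow> 'a \<Rightarrow> 'a" where
  "word simple ws = foldr (\<lambda>i f. refl (simple i) \<circ> f) ws id"

definition weyl :: "('i \<Rightarrow> 'a::euclidean_space) \<Rightarrow> ('a \<Rightarrow> 'a) set" where
  "weyl simple = {word simple ws | ws. True}"

definition weyl_sub :: "('i \<Rightarrow> 'a::euclidean_space) \<Rightarrow> 'i set \<Rightarrow> ('a \<Rightarrow> 'a) set" where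
  "weyl_sub simple S = {word simple ws | ws. set ws \<subseteq> S}"

definition wlen :: "('i \<Rightarrow> 'a::euclidean_space) \<Rightarrow> ('a \<Rightarrow> 'a) \<Rightarrow> nat" where
  "wlen simple w = (LEAST n. \<exists>ws. length ws = n \<and> word simple ws = w)"

definition is_longest :: "('i \<Rightarrow> 'a::euclidean_space) \<Rightarrow> ('a \<Rightarrow> 'a) set \<Rightarrow> ('a \<Rightarrow> 'a) \<Rightarrow> bool" where
  "is_longest simple G w \<longleftrightarrow> w \<in> G \<and> (\<forall>y\<in>G. wlen simple y \<le> wlen simple w)"

definition reduced_word :: "('i \<Rightarrow> 'a::euclidean_space) \<Rightarrow> 'i list \<Rightarrow> bool" where
  "reduced_word simple ws \<longleftrightarrow> length ws = wlen simple (word simple ws)"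

text \<open>beta_j = s_{i_N} ... s_{i_{j+1}} alpha_{i_j}, listed for j = 1..N (0-based list).\<close>
definition fin_betas :: "('i \<Rightarrow> 'a::euclidean_space) \<Rightarrow> 'i list \<Rightarrow> 'a list" where
  "fin_betas simple ws =
     map (\<lambda>j. word simple (rev (drop (Suc j) ws)) (simple (ws ! j))) [0..<length ws]"

text \<open>alpha succ beta in the total order: beta_1 succ beta_2 succ ... succ beta_N.\<close>
definition fin_succ :: "('i \<Rightarrow> 'a::euclidean_space) \<Rightarrow> 'i list \<Rightarrow> 'a \<Rightarrow> 'a \<Rightarrow> bool" where
  "fin_succ simple ws \<alpha> \<beta> \<longleftrightarrow>
     (\<exists>j k. j < k \<and> k < length ws \<and> fin_betas simple ws ! j = \<alpha> \<and> fin_betas simple ws ! k = \<beta>)"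

text \<open>An affine root alpha^vee + a delta is represented as the pair (coroot alpha, a).\<close>
definition aff_roots :: "'a::euclidean_space set \<Rightarrow> ('a \<times> real) set" where
  "aff_roots R = {(coroot \<alpha>, of_int a) | \<alpha> a. \<alpha> \<in> R}"

definition aff_pos :: "'a::euclidean_space set \<Rightarrow> ('i::finite \<Rightarrow> 'a) \<Rightarrow> ('a \<times> real) set" where
  "aff_pos R simple = {(coroot \<alpha>, of_int a) | \<alpha> a. \<alpha> \<in> R \<and>
       (a > 0 \<or> (a = 0 \<and> \<alpha> \<in> pos_roots R simple))}"

definition aff_neg :: "'a::euclidean_space set \<Rightarrow> ('i::finite \<Rightarrow> 'a) \<Rightarrow> ('a \<times> real) set" where
  "aff_neg R simple = uminus ` aff_pos R simple"

text \<open>The element v t(nu), via its action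
  v t(nu)(x + r delta) = v x + (r - <nu, x>) delta.\<close>
definition ext_elt :: "('a::euclidean_space \<Rightarrow> 'a) \<Rightarrow> 'a \<Rightarrow> ('a \<times> real \<Rightarrow> 'a \<times> real)" where
  "ext_elt v \<nu> = (\<lambda>(x, r). (v x, r - \<nu> \<bullet> x))"

definition transl :: "'a::euclidean_space \<Rightarrow> ('a \<times> real \<Rightarrow> 'a \<times> real)" where
  "transl \<nu> = ext_elt id \<nu>"

definition ext_weyl :: "'a::euclidean_space set \<Rightarrow> ('i \<Rightarrow> 'a) \<Rightarrow> ('a \<times> real \<Rightarrow> 'a \<times> real) set" where
  "ext_weyl R simple = {ext_elt v \<nu> | v \<nu>. v \<in> weyl simple \<and> \<nu> \<in> weights R}"

definition alen :: "'a::euclidean_space set \<Rightarrow> ('i::finite \<Rightarrow> 'a) \<Rightarrow> ('a \<times> real \<Rightarrow> 'a \<times> real) \<Rightarrow> nat" where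
  "alen R simple x = card {\<beta> \<in> aff_pos R simple. x \<beta> \<in> aff_neg R simple}"

definition Omega :: "'a::euclidean_space set \<Rightarrow> ('i::finite \<Rightarrow> 'a) \<Rightarrow> ('a \<times> real \<Rightarrow> 'a \<times> real) set" where
  "Omega R simple = {x \<in> ext_weyl R simple. alen R simple x = 0}"

text \<open>Affine simple indices: Some i for i in I, None for the index 0.\<close>
definition aff_simple_root :: "('i \<Rightarrow> 'a::euclidean_space) \<Rightarrow> 'a \<Rightarrow> 'i option \<Rightarrow> 'a \<times> real" where
  "aff_simple_root simple \<phi> j = (case j of Some i \<Rightarrow> (coroot (simple i), 0) | None \<Rightarrow> (- coroot \<phi>, 1))"

text \<open>s_i = s_{alpha_i} for i in I, and s_0 = s_phi t(-phi) (reflection in delta - phi^vee).\<close>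
definition aff_refl :: "('i \<Rightarrow> 'a::euclidean_space) \<Rightarrow> 'a \<Rightarrow> 'i option \<Rightarrow> ('a \<times> real \<Rightarrow> 'a \<times> real)" where
  "aff_refl simple \<phi> j = (case j of Some i \<Rightarrow> ext_elt (refl (simple i)) 0 | None \<Rightarrow> ext_elt (refl \<phi>) (- \<phi>))"

definition aword :: "('i \<Rightarrow> 'a::euclidean_space) \<Rightarrow> 'a \<Rightarrow> 'i option list \<Rightarrow> ('a \<times> real \<Rightarrow> 'a \<times> real)" where
  "aword simple \<phi> ls = foldr (\<lambda>j f. aff_refl simple \<phi> j \<circ> f) ls id"

text \<open>tilde beta_j = s_{l_L} ... s_{l_{j+1}} alpha^vee_{l_j} (0-based list).\<close>
definition aff_betas :: "('i \<Rightarrow> 'a::euclidean_space) \<Rightarrow> 'a \<Rightarrow> 'i option list \<Rightarrow> ('a \<times> real) list" where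
  "aff_betas simple \<phi> ls =
     map (\<lambda>j. aword simple \<phi> (rev (drop (Suc j) ls)) (aff_simple_root simple \<phi> (ls ! j))) [0..<length ls]"

text \<open>The map Phi (lm = lambda_-, w0 = longest element); second component w0(beta-bar)^vee.\<close>
definition Phi :: "'a::euclidean_space \<Rightarrow> ('a \<Rightarrow> 'a) \<Rightarrow> 'a \<times> real \<Rightarrow> real \<times> 'a" where
  "Phi lm w0 \<beta> = ((lm \<bullet> fst \<beta> - snd \<beta>) / (lm \<bullet> fst \<beta>), coroot (w0 (fst \<beta>)))"

definition aff_prec :: "('i \<Rightarrow> 'a::euclidean_space) \<Rightarrow> 'i list \<Rightarrow> 'a \<Rightarrow> ('a \<Rightarrow> 'a) \<Rightarrow> 'a \<times> real \<Rightarrow> 'a \<times> real \<Rightarrow> bool" where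
  "aff_prec simple ws lm w0 \<beta> \<gamma> \<longleftrightarrow>
     fst (Phi lm w0 \<beta>) < fst (Phi lm w0 \<gamma>) \<or>
     (fst (Phi lm w0 \<beta>) = fst (Phi lm w0 \<gamma>) \<and> fin_succ simple ws (snd (Phi lm w0 \<beta>)) (snd (Phi lm w0 \<gamma>)))"

end

theory Submission
  imports Defs
begin

lemma coroot_inner: "x \<bullet> coroot a = (2 / (a \<bullet> a)) * (x \<bullet> a)"
  by (simp add: coroot_def)

lemma coroot_nz: "a \<noteq> 0 \<Longrightarrow> coroot a \<noteq> 0"
  by (simp add: coroot_def)

lemma coroot_coroot: "a \<noteq> 0 \<Longrightarrow> coroot (coroot a) = a"
  by (simp add: coroot_def inner_commute power2_eq_square field_simps)

lemma coroot_self: "a \<noteq> 0 \<Longrightarrow> a \<bullet> coroot a = 2"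
  by (simp add: coroot_def)

lemma coroot_neg: "coroot (- a) = - coroot a"
  by (simp add: coroot_def)

lemma coroot_inj: "a \<noteq> 0 \<Longrightarrow> b \<noteq> 0 \<Longrightarrow> coroot a = coroot b \<Longrightarrow> a = b"
  by (metis coroot_coroot)

lemma refl_linear: "linear (refl a)"
  by (rule linearI) (auto simp: refl_def inner_add_left algebra_simps)


definition orth :: "('a::euclidean_space \<Rightarrow> 'a) \<Rightarrow> bool" where
  "orth v \<longleftrightarrow> linear v \<and> (\<forall>x y. v x \<bullet> v y = x \<bullet> y)"

lemma refl_inner: "a \<noteq> 0 \<Longrightarrow> refl a x \<bullet> refl a y = x \<bullet> y"
  by (simp add: refl_def coroot_def inner_diff_left inner_diff_right algebra_simps inner_commute)

lemma refl_invol: "a \<noteq> 0 \<Longrightarrow> refl a (refl a x) = x"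
  by (simp add: refl_def coroot_def inner_diff_left algebra_simps inner_commute)

lemma refl_self: "a \<noteq> 0 \<Longrightarrow> refl a a = - a"
  by (simp add: refl_def coroot_self inner_commute scaleR_2)

lemma orth_refl: "a \<noteq> 0 \<Longrightarrow> orth (refl a)"
  by (simp add: orth_def refl_linear refl_inner)

lemma orth_comp: "orth v \<Longrightarrow> orth w \<Longrightarrow> orth (v \<circ> w)"
  by (simp add: orth_def linear_compose)

lemma orth_id: "orth id"
  by (simp add: orth_def linear_iff)

lemma orth_linear: "orth v \<Longrightarrow> linear v" by (simp add: orth_def)
lemma orth_inner: "orth v \<Longrightarrow> v x \<bullet> v y = x \<bullet> y" by (simp add: orth_def)

lemma orth_scale: "orth v \<Longrightarrow> v (c *\<^sub>R x) = c *\<^sub>R v x"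
  using orth_linear linear_scale by blast
lemma orth_neg: "orth v \<Longrightarrow> v (- x) = - v x"
  using orth_linear linear_neg by blast
lemma orth_add: "orth v \<Longrightarrow> v (x + y) = v x + v y"
  using orth_linear linear_add by blast
lemma orth_diff: "orth v \<Longrightarrow> v (x - y) = v x - v y"
  using orth_linear linear_diff by blast

lemma orth_coroot: "orth v \<Longrightarrow> coroot (v x) = v (coroot x)"
  by (simp add: coroot_def orth_inner orth_scale)

lemma orth_inj: "orth v \<Longrightarrow> v x = v y \<Longrightarrow> x = y"
proof -
  assume o: "orth v" and e: "v x = v y"
  have "v (x - y) = 0" using e orth_diff[OF o] by simp
  hence "(x - y) \<bullet> (x - y) = 0" using orth_inner[OF o, of "x-y" "x-y"] by simp
  thus ?thesis by simp
qed

lemma orth_conj: "orth v \<Longrightarrow> v (refl a x) = refl (v a) (v x)"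
  by (simp add: refl_def orth_coroot orth_diff orth_scale orth_inner)

lemma word_Nil[simp]: "word s [] = id" by (simp add: word_def)
lemma word_Cons[simp]: "word s (i # ws) = refl (s i) \<circ> word s ws" by (simp add: word_def)
lemma word_append: "word s (xs @ ys) = word s xs \<circ> word s ys"
  by (induction xs) auto
lemma word_snoc: "word s (xs @ [i]) = word s xs \<circ> refl (s i)"
  by (simp add: word_append)

lemma orth_word: "(\<forall>i. s i \<noteq> 0) \<Longrightarrow> orth (word s ws)"
  by (induction ws) (auto intro: orth_comp orth_refl orth_id)

lemma word_rev_inv: "(\<forall>i. s i \<noteq> 0) \<Longrightarrow> word s (rev ws) (word s ws x) = x"
  by (induction ws arbitrary: x) (auto simp: word_append refl_invol)

lemma word_inv_rev: "(\<forall>i. s i \<noteq> 0) \<Longrightarrow> word s ws (word s (rev ws) x) = x"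
  using word_rev_inv[of s "rev ws"] by simp

lemma word_adj: "(\<forall>i. s i \<noteq> 0) \<Longrightarrow> word s ws x \<bullet> y = x \<bullet> word s (rev ws) y"
proof -
  assume nz: "\<forall>i. s i \<noteq> 0"
  have "word s ws x \<bullet> y = word s ws x \<bullet> word s ws (word s (rev ws) y)"
    using word_inv_rev[OF nz] by simp
  also have "\<dots> = x \<bullet> word s (rev ws) y" using orth_word[OF nz] orth_inner by blast
  finally show ?thesis .
qed

locale RS =
  fixes R :: "'a::euclidean_space set" and simple :: "'i::finite \<Rightarrow> 'a"
  assumes rs: "root_system R" and ss: "simple_system R simple"
begin

definition pos where "pos = pos_roots R simple"

lemma R_finite: "finite R" using rs by (simp add: root_system_def)
lemma zero_notin: "0 \<notin> R" using rs by (simp add: root_system_def)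
lemma R_nz: "\<alpha> \<in> R \<Longrightarrow> \<alpha> \<noteq> 0" using zero_notin by auto
lemma refl_R: "\<alpha> \<in> R \<Longrightarrow> \<beta> \<in> R \<Longrightarrow> refl \<alpha> \<beta> \<in> R" using rs by (simp add: root_system_def)
lemma int_R: "\<alpha> \<in> R \<Longrightarrow> \<beta> \<in> R \<Longrightarrow> \<beta> \<bullet> coroot \<alpha> \<in> \<int>" using rs by (simp add: root_system_def)
lemma reduced_R: "\<alpha> \<in> R \<Longrightarrow> c *\<^sub>R \<alpha> \<in> R \<Longrightarrow> c = 1 \<or> c = -1"
  using rs by (simp add: root_system_def)
lemma simple_R: "simple i \<in> R" using ss by (auto simp: simple_system_def)
lemma simple_nz: "simple i \<noteq> 0" using simple_R R_nz by blast
lemma simple_nz_all: "\<forall>i. simple i \<noteq> 0" using simple_nz by blast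
lemma neg_R: "\<alpha> \<in> R \<Longrightarrow> - \<alpha> \<in> R" using refl_R[of \<alpha> \<alpha>] refl_self R_nz by force
lemma word_R: "\<alpha> \<in> R \<Longrightarrow> word simple ws \<alpha> \<in> R"
  by (induction ws) (auto intro: refl_R simple_R)
lemma orth_w: "orth (word simple ws)" using orth_word simple_nz_all by blast

lemma pos_R: "\<alpha> \<in> pos \<Longrightarrow> \<alpha> \<in> R" by (simp add: pos_def pos_roots_def)
lemma R_cases: "\<alpha> \<in> R \<Longrightarrow> \<alpha> \<in> pos \<or> - \<alpha> \<in> pos"
  using ss by (simp add: simple_system_def pos_def)

lemma indep: "independent (range simple)" using ss by (simp add: simple_system_def)
lemma inj_simple: "inj simple" using ss by (simp add: simple_system_def)

lemma nonneg_comb_span: "nonneg_comb simple x \<Longrightarrow> x \<in> span (range simple)"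
  apply (clarsimp simp: nonneg_comb_def)
  apply (rule span_sum) apply (rule span_scale) apply (rule span_base) by simp

lemma span_simple: "span (range simple) = UNIV"
proof -
  have "R \<subseteq> span (range simple)"
  proof
    fix \<alpha> assume a: "\<alpha> \<in> R"
    from R_cases[OF a] show "\<alpha> \<in> span (range simple)"
    proof
      assume "\<alpha> \<in> pos" thus ?thesis using nonneg_comb_span by (simp add: pos_def pos_roots_def)
    next
      assume "- \<alpha> \<in> pos" hence "- \<alpha> \<in> span (range simple)" using nonneg_comb_span by (simp add: pos_def pos_roots_def)
      thus ?thesis using span_neg by fastforce
    qed
  qed
  hence "span R \<subseteq> span (range simple)" by (simp add: span_minimal)
  thus ?thesis using rs by (auto simp: root_system_def)
qed

lemma exists_coeff: "\<exists>c. x = (\<Sum>i\<in>UNIV. c i *\<^sub>R simple i)"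
proof -
  have "x \<in> span (range simple)" using span_simple by simp
  then obtain u where u: "x = (\<Sum>v\<in>range simple. u v *\<^sub>R v)"
    using span_finite[of "range simple"] by auto
  have "x = (\<Sum>i\<in>UNIV. u (simple i) *\<^sub>R simple i)"
    using u sum.reindex[OF inj_simple, of "\<lambda>v. u v *\<^sub>R v"] by simp
  thus ?thesis by (rule exI[of _ "\<lambda>i. u (simple i)"])
qed

lemma coeff_zero: "(\<Sum>i\<in>UNIV. c i *\<^sub>R simple i) = 0 \<Longrightarrow> c = (\<lambda>_. 0)"
proof (rule ccontr)
  assume s: "(\<Sum>i\<in>UNIV. c i *\<^sub>R simple i) = 0" and n: "c \<noteq> (\<lambda>_. 0)"
  define u where "u v = c (inv simple v)" for v
  have "(\<Sum>v\<in>range simple. u v *\<^sub>R v) = (\<Sum>i\<in>UNIV. u (simple i) *\<^sub>R simple i)"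
    using sum.reindex[OF inj_simple, of "\<lambda>v. u v *\<^sub>R v"] by simp
  also have "\<dots> = 0" using s by (simp add: u_def inv_f_f[OF inj_simple])
  finally have z: "(\<Sum>v\<in>range simple. u v *\<^sub>R v) = 0" .
  from n obtain i where "c i \<noteq> 0" by auto
  hence "\<exists>v\<in>range simple. u v \<noteq> 0" by (auto simp: u_def inv_f_f[OF inj_simple])
  hence "dependent (range simple)" using z dependent_finite[of "range simple"] by auto
  thus False using indep by simp
qed

lemma coeff_unique: "(\<Sum>i\<in>UNIV. c i *\<^sub>R simple i) = (\<Sum>i\<in>UNIV. d i *\<^sub>R simple i) \<Longrightarrow> c = d"
proof -
  assume e: "(\<Sum>i\<in>UNIV. c i *\<^sub>R simple i) = (\<Sum>i\<in>UNIV. d i *\<^sub>R simple i)"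
  have "(\<Sum>i\<in>UNIV. (c i - d i) *\<^sub>R simple i) = 0"
    using e by (simp add: scaleR_diff_left sum_subtractf)
  from coeff_zero[OF this] show "c = d" by (auto simp: fun_eq_iff)
qed

definition cf :: "'a \<Rightarrow> 'i \<Rightarrow> real" where
  "cf x = (SOME c. x = (\<Sum>i\<in>UNIV. c i *\<^sub>R simple i))"

lemma cf_eq: "x = (\<Sum>i\<in>UNIV. cf x i *\<^sub>R simple i)"
  unfolding cf_def using exists_coeff[of x] by (rule someI_ex)

lemma cf_unique: "x = (\<Sum>i\<in>UNIV. c i *\<^sub>R simple i) \<Longrightarrow> cf x = c"
  using coeff_unique cf_eq by metis

lemma cf_add: "cf (x + y) = (\<lambda>i. cf x i + cf y i)"
proof (rule cf_unique)
  have "x + y = (\<Sum>i\<in>UNIV. cf x i *\<^sub>R simple i) + (\<Sum>i\<in>UNIV. cf y i *\<^sub>R simple i)" by (simp flip: cf_eq)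
  thus "x + y = (\<Sum>i\<in>UNIV. (cf x i + cf y i) *\<^sub>R simple i)" by (simp add: scaleR_add_left sum.distrib)
qed

lemma cf_scale: "cf (a *\<^sub>R x) = (\<lambda>i. a * cf x i)"
proof (rule cf_unique)
  have "a *\<^sub>R x = a *\<^sub>R (\<Sum>i\<in>UNIV. cf x i *\<^sub>R simple i)" by (simp flip: cf_eq)
  thus "a *\<^sub>R x = (\<Sum>i\<in>UNIV. (a * cf x i) *\<^sub>R simple i)" by (simp add: scaleR_sum_right)
qed

lemma cf_neg: "cf (- x) = (\<lambda>i. - cf x i)"
  using cf_scale[of "-1" x] by simp

lemma cf_diff: "cf (x - y) = (\<lambda>i. cf x i - cf y i)"
  using cf_add[of x "-y"] cf_neg[of y] by simp

lemma sum_single: "(\<Sum>j\<in>UNIV. c j *\<^sub>R simple j) = c i *\<^sub>R simple i" if "\<forall>j. j \<noteq> i \<longrightarrow> c j = 0"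
  using that by (subst sum.remove[of UNIV i]) auto

lemma cf_simple: "cf (simple j) = (\<lambda>i. if i = j then 1 else 0)"
  by (rule cf_unique) (subst sum_single[where i=j], auto)

definition ht :: "'a \<Rightarrow> real" where "ht x = (\<Sum>i\<in>UNIV. cf x i)"

lemma ht_add: "ht (x + y) = ht x + ht y" by (simp add: ht_def cf_add sum.distrib)
lemma ht_scale: "ht (a *\<^sub>R x) = a * ht x" by (simp add: ht_def cf_scale sum_distrib_left)
lemma ht_neg: "ht (- x) = - ht x" by (simp add: ht_def cf_neg sum_negf)
lemma linear_ht: "linear ht" by (rule linearI) (auto simp: ht_add ht_scale)
lemma ht_sum: "ht (\<Sum>i\<in>A. f i) = (\<Sum>i\<in>A. ht (f i))"
  using linear_sum[OF linear_ht] by blast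

lemma pos_cf: "\<alpha> \<in> pos \<Longrightarrow> \<exists>c::'i\<Rightarrow>nat. cf \<alpha> = (\<lambda>i. real (c i))"
proof -
  assume "\<alpha> \<in> pos"
  then obtain c :: "'i \<Rightarrow> nat" where "\<alpha> = (\<Sum>i\<in>UNIV. real (c i) *\<^sub>R simple i)"
    by (auto simp: pos_def pos_roots_def nonneg_comb_def)
  hence "cf \<alpha> = (\<lambda>i. real (c i))" by (rule cf_unique)
  thus ?thesis by blast
qed

lemma pos_cf_nonneg: "\<alpha> \<in> pos \<Longrightarrow> cf \<alpha> i \<ge> 0"
  using pos_cf by fastforce

lemma pos_ht: "\<alpha> \<in> pos \<Longrightarrow> ht \<alpha> > 0"
proof -
  assume p: "\<alpha> \<in> pos"
  have nz: "\<alpha> \<noteq> 0" using p pos_R R_nz by blast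
  have "\<exists>i. cf \<alpha> i \<noteq> 0"
  proof (rule ccontr)
    assume "\<not> ?thesis"
    hence "\<alpha> = 0" using cf_eq[of \<alpha>] by simp
    thus False using nz by simp
  qed
  then obtain i where "cf \<alpha> i \<noteq> 0" by blast
  hence "cf \<alpha> i > 0" using pos_cf_nonneg[OF p, of i] by simp
  moreover have "(\<Sum>j\<in>UNIV. cf \<alpha> j) \<ge> cf \<alpha> i"
    using member_le_sum[of i UNIV "cf \<alpha>"] pos_cf_nonneg[OF p] by simp
  ultimately show ?thesis by (simp add: ht_def)
qed

lemma pos_not_neg: "\<alpha> \<in> pos \<Longrightarrow> - \<alpha> \<notin> pos"
  using pos_ht[of \<alpha>] pos_ht[of "-\<alpha>"] ht_neg[of \<alpha>] by linarith

lemma R_pos_iff: "\<alpha> \<in> R \<Longrightarrow> \<alpha> \<in> pos \<longleftrightarrow> ht \<alpha> > 0"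
  using R_cases[of \<alpha>] pos_ht[of \<alpha>] pos_ht[of "-\<alpha>"] ht_neg[of \<alpha>] by auto

lemma R_neg_iff: "\<alpha> \<in> R \<Longrightarrow> - \<alpha> \<in> pos \<longleftrightarrow> ht \<alpha> < 0"
  using R_cases[of \<alpha>] pos_ht[of \<alpha>] pos_ht[of "-\<alpha>"] ht_neg[of \<alpha>] by auto


lemma refl_simple_pos: "\<alpha> \<in> pos \<Longrightarrow> \<alpha> \<noteq> simple i \<Longrightarrow> refl (simple i) \<alpha> \<in> pos"
proof -
  assume p: "\<alpha> \<in> pos" and ne: "\<alpha> \<noteq> simple i"
  have aR: "\<alpha> \<in> R" using p pos_R by blast
  have "\<exists>j. j \<noteq> i \<and> cf \<alpha> j > 0"
  proof (rule ccontr)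
    assume nn: "\<not> (\<exists>j. j \<noteq> i \<and> cf \<alpha> j > 0)"
    have z: "\<forall>j. j \<noteq> i \<longrightarrow> cf \<alpha> j = 0"
    proof (intro allI impI)
      fix j assume "j \<noteq> i"
      hence "\<not> cf \<alpha> j > 0" using nn by blast
      thus "cf \<alpha> j = 0" using pos_cf_nonneg[OF p, of j] by linarith
    qed
    hence ea: "\<alpha> = cf \<alpha> i *\<^sub>R simple i" using cf_eq[of \<alpha>] sum_single[where c="cf \<alpha>" and i=i] by simp
    hence "cf \<alpha> i = 1 \<or> cf \<alpha> i = -1" using reduced_R[OF simple_R, of "cf \<alpha> i" i] aR by simp
    hence "cf \<alpha> i = 1" using pos_cf_nonneg[OF p, of i] by auto
    thus False using ea ne by simp
  qed
  then obtain j where j: "j \<noteq> i" "cf \<alpha> j > 0" by blast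
  define k where "k = \<alpha> \<bullet> coroot (simple i)"
  have r: "refl (simple i) \<alpha> = \<alpha> - k *\<^sub>R simple i" by (simp add: refl_def k_def)
  have "cf (refl (simple i) \<alpha>) j = cf \<alpha> j"
    using j(1) by (simp add: r cf_diff cf_scale cf_simple)
  moreover have rR: "refl (simple i) \<alpha> \<in> R" using refl_R[OF simple_R aR] .
  ultimately show ?thesis
    using R_cases[OF rR] pos_cf_nonneg[of "- refl (simple i) \<alpha>" j] j(2) by (auto simp: cf_neg)
qed

end


lemma fin_betas_snoc: "fin_betas s (ws @ [i]) = map (refl (s i)) (fin_betas s ws) @ [s i]"
  unfolding fin_betas_def
  by (auto simp: nth_append word_append)

lemma length_fin_betas[simp]: "length (fin_betas s ws) = length ws"
  by (simp add: fin_betas_def)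

context RS begin

definition invs :: "('a \<Rightarrow> 'a) \<Rightarrow> 'a set" where "invs w = {\<alpha> \<in> pos. - w \<alpha> \<in> pos}"

lemma invs_id[simp]: "invs id = {}" "invs (\<lambda>a. a) = {}"
  using pos_not_neg by (auto simp: invs_def)

lemma pos_finite: "finite pos" using R_finite pos_R by (meson finite_subset subsetI)
lemma invs_finite: "finite (invs w)" using pos_finite by (simp add: invs_def)

lemma simple_pos: "simple i \<in> pos"
proof -
  have "simple i = (\<Sum>j\<in>UNIV. real (if j = i then 1 else 0::nat) *\<^sub>R simple j)"
    by (subst sum_single[where i=i]) auto
  hence "nonneg_comb simple (simple i)" unfolding nonneg_comb_def
    by (rule exI[of _ "\<lambda>j. if j = i then 1 else 0::nat"])
  thus ?thesis using simple_R by (auto simp: pos_def pos_roots_def)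
qed

lemma neg_simple_not_pos: "- simple i \<notin> pos" using simple_pos pos_not_neg by blast

lemma invs_step_pos:
  assumes w: "w = word simple ws" and p: "w (simple i) \<in> pos"
  shows "invs (w \<circ> refl (simple i)) = insert (simple i) (refl (simple i) ` invs w)"
proof
  have o: "orth w" using w orth_w by simp
  show "invs (w \<circ> refl (simple i)) \<subseteq> insert (simple i) (refl (simple i) ` invs w)"
  proof
    fix \<beta> assume b: "\<beta> \<in> invs (w \<circ> refl (simple i))"
    show "\<beta> \<in> insert (simple i) (refl (simple i) ` invs w)"
    proof (cases "\<beta> = simple i")
      case False
      hence "refl (simple i) \<beta> \<in> pos" using b refl_simple_pos by (auto simp: invs_def)
      hence "refl (simple i) \<beta> \<in> invs w" using b by (auto simp: invs_def)
      moreover have "\<beta> = refl (simple i) (refl (simple i) \<beta>)" by (simp add: refl_invol simple_nz)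
      ultimately show ?thesis by blast
    qed simp
  qed
  show "insert (simple i) (refl (simple i) ` invs w) \<subseteq> invs (w \<circ> refl (simple i))"
  proof
    fix \<beta> assume b: "\<beta> \<in> insert (simple i) (refl (simple i) ` invs w)"
    show "\<beta> \<in> invs (w \<circ> refl (simple i))"
    proof (cases "\<beta> = simple i")
      case True
      thus ?thesis using p simple_pos by (simp add: invs_def refl_self simple_nz orth_neg[OF o])
    next
      case False
      then obtain \<gamma> where g: "\<gamma> \<in> invs w" "\<beta> = refl (simple i) \<gamma>" using b by blast
      have "\<gamma> \<noteq> simple i" using g p pos_not_neg by (auto simp: invs_def)
      hence "\<beta> \<in> pos" using g refl_simple_pos by (auto simp: invs_def)
      thus ?thesis using g by (simp add: invs_def refl_invol simple_nz)
    qed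
  qed
qed

lemma invs_step_neg:
  assumes w: "w = word simple ws" and p: "- w (simple i) \<in> pos"
  shows "invs (w \<circ> refl (simple i)) = refl (simple i) ` (invs w - {simple i})"
proof
  have o: "orth w" using w orth_w by simp
  show "invs (w \<circ> refl (simple i)) \<subseteq> refl (simple i) ` (invs w - {simple i})"
  proof
    fix \<beta> assume b: "\<beta> \<in> invs (w \<circ> refl (simple i))"
    have ne: "\<beta> \<noteq> simple i"
    proof
      assume "\<beta> = simple i"
      hence "w (simple i) \<in> pos" using b by (simp add: invs_def refl_self simple_nz orth_neg[OF o])
      thus False using p pos_not_neg by force
    qed
    hence r: "refl (simple i) \<beta> \<in> pos" using b refl_simple_pos by (auto simp: invs_def)
    have "refl (simple i) \<beta> \<noteq> simple i"
    proof
      assume "refl (simple i) \<beta> = simple i"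
      hence "\<beta> = - simple i" using refl_invol[OF simple_nz, of i \<beta>] refl_self[OF simple_nz] by metis
      thus False using b neg_simple_not_pos by (auto simp: invs_def)
    qed
    hence "refl (simple i) \<beta> \<in> invs w - {simple i}" using b r by (auto simp: invs_def)
    moreover have "\<beta> = refl (simple i) (refl (simple i) \<beta>)" by (simp add: refl_invol simple_nz)
    ultimately show "\<beta> \<in> refl (simple i) ` (invs w - {simple i})" by blast
  qed
  show "refl (simple i) ` (invs w - {simple i}) \<subseteq> invs (w \<circ> refl (simple i))"
  proof
    fix \<beta> assume b: "\<beta> \<in> refl (simple i) ` (invs w - {simple i})"
    then obtain \<gamma> where g: "\<gamma> \<in> invs w" "\<gamma> \<noteq> simple i" "\<beta> = refl (simple i) \<gamma>" by blast
    hence "\<beta> \<in> pos" using refl_simple_pos by (auto simp: invs_def)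
    thus "\<beta> \<in> invs (w \<circ> refl (simple i))" using g by (simp add: invs_def refl_invol simple_nz)
  qed
qed

lemma refl_inj: "inj_on (refl (simple i)) A"
  by (rule inj_onI) (metis refl_invol simple_nz)

lemma card_invs_pos:
  assumes w: "w = word simple ws" and p: "w (simple i) \<in> pos"
  shows "card (invs (w \<circ> refl (simple i))) = Suc (card (invs w))"
proof -
  have "simple i \<notin> refl (simple i) ` invs w"
  proof
    assume "simple i \<in> refl (simple i) ` invs w"
    then obtain \<gamma> where "\<gamma> \<in> invs w" "simple i = refl (simple i) \<gamma>" by blast
    hence "\<gamma> = - simple i" "\<gamma> \<in> pos" using refl_invol[OF simple_nz, of i \<gamma>] refl_self[OF simple_nz, of i]
      by (auto simp: invs_def)
    thus False using neg_simple_not_pos by simp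
  qed
  thus ?thesis using invs_step_pos[OF w p] invs_finite card_image[OF refl_inj] by simp
qed

lemma card_invs_neg:
  assumes w: "w = word simple ws" and p: "- w (simple i) \<in> pos"
  shows "Suc (card (invs (w \<circ> refl (simple i)))) = card (invs w)"
proof -
  have "simple i \<in> invs w" using p simple_pos by (simp add: invs_def)
  thus ?thesis using invs_step_neg[OF w p] invs_finite card_image[OF refl_inj]
    by (simp add: card_Diff_singleton) (metis Suc_pred card_gt_0_iff empty_iff invs_finite)
qed

lemma word_simple_cases: "word simple ws (simple i) \<in> pos \<or> - word simple ws (simple i) \<in> pos"
  using R_cases word_R simple_R by blast

lemma card_invs_le: "card (invs (word simple ws)) \<le> length ws"
proof (induction ws rule: rev_induct)
  case Nil
  show ?case by simp
next
  case (snoc i ws)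
  from word_simple_cases[of ws i] have "card (invs (word simple ws \<circ> refl (simple i))) \<le> Suc (length ws)"
  proof
    assume "word simple ws (simple i) \<in> pos"
    from card_invs_pos[OF refl this] snoc.IH show ?thesis by linarith
  next
    assume "- word simple ws (simple i) \<in> pos"
    from card_invs_neg[OF refl this] snoc.IH show ?thesis by linarith
  qed
  thus ?case by (simp only: word_snoc length_append_singleton)
qed

lemma exchange:
  "- word simple ws (simple i) \<in> pos \<Longrightarrow>
     \<exists>ws'. Suc (length ws') = length ws \<and> word simple ws' = word simple ws \<circ> refl (simple i)"
proof (induction ws)
  case Nil
  thus ?case using neg_simple_not_pos by simp
next
  case (Cons j rest)
  show ?case
  proof (cases "- word simple rest (simple i) \<in> pos")
    case True
    then obtain r' where "Suc (length r') = length rest" "word simple r' = word simple rest \<circ> refl (simple i)"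
      using Cons.IH by blast
    thus ?thesis by (intro exI[of _ "j # r'"]) auto
  next
    case False
    hence gp: "word simple rest (simple i) \<in> pos" using word_simple_cases by blast
    have "- refl (simple j) (word simple rest (simple i)) \<in> pos" using Cons.prems by simp
    hence eq: "word simple rest (simple i) = simple j"
      using refl_simple_pos[OF gp, of j] pos_not_neg by blast
    have "word simple rest = word simple (j # rest) \<circ> refl (simple i)"
    proof
      fix x
      have "(word simple (j # rest) \<circ> refl (simple i)) x
          = refl (word simple rest (simple i)) (word simple rest (refl (simple i) x))"
        by (simp add: eq)
      also have "\<dots> = word simple rest (refl (simple i) (refl (simple i) x))"
        by (simp add: orth_conj[OF orth_w])
      also have "\<dots> = word simple rest x" by (simp add: refl_invol simple_nz)
      finally show "word simple rest x = (word simple (j # rest) \<circ> refl (simple i)) x" by simp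
    qed
    show ?thesis
    proof (intro exI conjI)
      show "Suc (length rest) = length (j # rest)" by simp
      show "word simple rest = word simple (j # rest) \<circ> refl (simple i)" by fact
    qed
  qed
qed

lemma wlen_le: "wlen simple (word simple ws) \<le> length ws"
  unfolding wlen_def by (rule Least_le) blast

lemma wlen_ex: "\<exists>ws'. length ws' = wlen simple (word simple ws) \<and> word simple ws' = word simple ws"
  unfolding wlen_def by (rule LeastI[of _ "length ws"]) blast

lemma reduced_prefix: "reduced_word simple (ws @ [i]) \<Longrightarrow> reduced_word simple ws"
proof -
  assume r: "reduced_word simple (ws @ [i])"
  obtain ws' where ws': "length ws' = wlen simple (word simple ws)" "word simple ws' = word simple ws"
    using wlen_ex by blast
  have "word simple (ws' @ [i]) = word simple (ws @ [i])" using ws' by (simp add: word_append)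
  hence "length (ws @ [i]) \<le> length (ws' @ [i])" using r wlen_le[of "ws' @ [i]"]
    by (simp add: reduced_word_def)
  thus ?thesis using ws' wlen_le[of ws] by (simp add: reduced_word_def)
qed

lemma reduced_pos: "reduced_word simple (ws @ [i]) \<Longrightarrow> word simple ws (simple i) \<in> pos"
proof (rule ccontr)
  assume r: "reduced_word simple (ws @ [i])" and n: "word simple ws (simple i) \<notin> pos"
  hence "- word simple ws (simple i) \<in> pos" using word_simple_cases by blast
  then obtain ws' where "Suc (length ws') = length ws" "word simple ws' = word simple (ws @ [i])"
    using exchange by (auto simp: word_snoc)
  thus False using r wlen_le[of ws'] by (simp add: reduced_word_def)
qed

lemma reduced_card: "reduced_word simple ws \<Longrightarrow> card (invs (word simple ws)) = length ws"
proof (induction ws rule: rev_induct)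
  case Nil
  show ?case by simp
next
  case (snoc i ws)
  show ?case
    by (simp only: word_snoc length_append_singleton card_invs_pos[OF refl reduced_pos[OF snoc.prems]]
        snoc.IH[OF reduced_prefix[OF snoc.prems]])
qed

lemma weyl_ex: "w \<in> weyl simple \<Longrightarrow> \<exists>ws. w = word simple ws" by (auto simp: weyl_def)

lemma reduced_ex: "w \<in> weyl simple \<Longrightarrow> \<exists>ws. word simple ws = w \<and> reduced_word simple ws"
proof -
  assume "w \<in> weyl simple"
  then obtain ws0 where "w = word simple ws0" using weyl_ex by blast
  then obtain ws where ws: "length ws = wlen simple w" "word simple ws = w" using wlen_ex by blast
  thus ?thesis by (auto simp: reduced_word_def)
qed

lemma wlen_card: "w \<in> weyl simple \<Longrightarrow> wlen simple w = card (invs w)"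
  using reduced_ex reduced_card by (metis reduced_word_def)

lemma word_weyl: "word simple ws \<in> weyl simple" by (auto simp: weyl_def)

lemma weyl_orth: "w \<in> weyl simple \<Longrightarrow> orth w" using weyl_ex orth_w by blast

lemma weyl_comp: "v \<in> weyl simple \<Longrightarrow> w \<in> weyl simple \<Longrightarrow> v \<circ> w \<in> weyl simple"
  by (auto simp: weyl_def word_append[symmetric])

lemma weyl_R: "w \<in> weyl simple \<Longrightarrow> \<alpha> \<in> R \<Longrightarrow> w \<alpha> \<in> R" using weyl_ex word_R by blast

lemma inv_empty_id: "w \<in> weyl simple \<Longrightarrow> (\<forall>\<alpha>\<in>pos. w \<alpha> \<in> pos) \<Longrightarrow> w = id"
proof -
  assume w: "w \<in> weyl simple" and p: "\<forall>\<alpha>\<in>pos. w \<alpha> \<in> pos"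
  have "invs w = {}" using p pos_not_neg by (auto simp: invs_def)
  hence "wlen simple w = 0" using wlen_card[OF w] by simp
  then obtain ws where "word simple ws = w" "reduced_word simple ws" using reduced_ex[OF w] by blast
  thus ?thesis using \<open>wlen simple w = 0\<close> by (simp add: reduced_word_def)
qed

lemma wlen_snoc_pos: "w \<in> weyl simple \<Longrightarrow> w (simple i) \<in> pos \<Longrightarrow>
    wlen simple (w \<circ> refl (simple i)) = Suc (wlen simple w)"
  using weyl_ex card_invs_pos wlen_card weyl_comp word_weyl
  by (metis (no_types, lifting) word_snoc)

lemma wlen_snoc_neg: "w \<in> weyl simple \<Longrightarrow> - w (simple i) \<in> pos \<Longrightarrow>
    wlen simple (w \<circ> refl (simple i)) < wlen simple w"
  using weyl_ex card_invs_neg wlen_card weyl_comp word_weyl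
  by (metis (no_types, lifting) lessI word_snoc)

lemma reduced_betas_set: "reduced_word simple ws \<Longrightarrow> set (fin_betas simple ws) = invs (word simple ws)"
proof (induction ws rule: rev_induct)
  case Nil
  show ?case by (simp add: fin_betas_def)
next
  case (snoc i ws)
  show ?case
    by (simp only: word_snoc fin_betas_snoc invs_step_pos[OF refl reduced_pos[OF snoc.prems]]
        snoc.IH[OF reduced_prefix[OF snoc.prems], symmetric] set_append set_map) simp
qed

lemma reduced_betas_distinct: "reduced_word simple ws \<Longrightarrow> distinct (fin_betas simple ws)"
  using reduced_betas_set reduced_card card_distinct by (metis length_fin_betas)

end


context RS begin

lemma ht_linear_pos:
  assumes z: "linear z" and a: "\<alpha> \<in> pos" and h: "\<forall>i. cf \<alpha> i > 0 \<longrightarrow> ht (z (simple i)) > 0"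
  shows "ht (z \<alpha>) > 0"
proof -
  have "z \<alpha> = (\<Sum>i\<in>UNIV. cf \<alpha> i *\<^sub>R z (simple i))"
    by (subst cf_eq[of \<alpha>]) (simp add: linear_sum[OF z] linear_scale[OF z])
  hence e: "ht (z \<alpha>) = (\<Sum>i\<in>UNIV. cf \<alpha> i * ht (z (simple i)))"
    by (simp add: ht_sum ht_scale)
  have nn: "\<forall>i\<in>UNIV. 0 \<le> cf \<alpha> i * ht (z (simple i))"
  proof
    fix i :: 'i
    show "0 \<le> cf \<alpha> i * ht (z (simple i))"
    proof (cases "cf \<alpha> i > 0")
      case True
      hence "ht (z (simple i)) > 0" using h by blast
      thus ?thesis using True by (simp add: zero_le_mult_iff)
    next
      case False hence "cf \<alpha> i = 0" using pos_cf_nonneg[OF a, of i] by linarith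
      thus ?thesis by simp
    qed
  qed
  have "\<exists>i. cf \<alpha> i \<noteq> 0"
  proof (rule ccontr)
    assume "\<not> ?thesis"
    hence "\<alpha> = 0" using cf_eq[of \<alpha>] by simp
    thus False using a pos_R R_nz by blast
  qed
  then obtain i where "cf \<alpha> i \<noteq> 0" by blast
  hence "cf \<alpha> i > 0" using pos_cf_nonneg[OF a, of i] by simp
  hence "0 < cf \<alpha> i * ht (z (simple i))" using h by simp
  also have "\<dots> \<le> (\<Sum>i\<in>UNIV. cf \<alpha> i * ht (z (simple i)))"
    using member_le_sum[of i UNIV "\<lambda>i. cf \<alpha> i * ht (z (simple i))"] nn by simp
  finally show ?thesis using e by simp
qed

lemma weyl_pos_of_simple:
  assumes z: "z \<in> weyl simple" and a: "\<alpha> \<in> pos" and h: "\<forall>i. cf \<alpha> i > 0 \<longrightarrow> z (simple i) \<in> pos"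
  shows "z \<alpha> \<in> pos"
proof -
  have "ht (z \<alpha>) > 0"
    using ht_linear_pos[OF orth_linear[OF weyl_orth[OF z]] a] h pos_ht by blast
  thus ?thesis using R_pos_iff weyl_R[OF z pos_R[OF a]] by blast
qed

lemma weyl_neg_of_simple:
  assumes z: "z \<in> weyl simple" and a: "\<alpha> \<in> pos" and h: "\<forall>i. cf \<alpha> i > 0 \<longrightarrow> - z (simple i) \<in> pos"
  shows "- z \<alpha> \<in> pos"
proof -
  have l: "linear (\<lambda>x. - z x)" using orth_linear[OF weyl_orth[OF z]] by (simp add: linear_compose_neg)
  have "ht (- z \<alpha>) > 0"
    using ht_linear_pos[OF l a] h pos_ht by blast
  thus ?thesis using R_pos_iff neg_R weyl_R[OF z pos_R[OF a]] by blast
qed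

lemma inner_cf: "l \<bullet> \<alpha> = (\<Sum>i\<in>UNIV. cf \<alpha> i * (l \<bullet> simple i))"
  by (subst cf_eq[of \<alpha>]) (simp add: inner_sum_right)

end

locale Setup = RS R simple for R :: "'a::euclidean_space set" and simple :: "'i::finite \<Rightarrow> 'a" +
  fixes lam :: 'a and w0 :: "'a \<Rightarrow> 'a" and ws1 ws2 :: "'i list"
  assumes dom: "lam \<in> dominant_weights R simple"
    and w0: "is_longest simple (weyl simple) w0"
    and v_min: "word simple ws1 lam = w0 lam"
      "\<forall>y\<in>weyl simple. y lam = w0 lam \<longrightarrow> wlen simple (word simple ws1) \<le> wlen simple y"
    and v_red: "reduced_word simple ws1"
    and w0S: "is_longest simple (weyl_sub simple {i. lam \<bullet> coroot (simple i) = 0}) (word simple ws2)"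
    and w0S_red: "reduced_word simple ws2"
begin

abbreviation "v \<equiv> word simple ws1"
abbreviation "wS \<equiv> word simple ws2"
abbreviation "lm \<equiv> w0 lam"
abbreviation "M \<equiv> length ws1"

lemma lam_weight: "\<alpha> \<in> R \<Longrightarrow> lam \<bullet> coroot \<alpha> \<in> \<int>"
  using dom by (auto simp: dominant_weights_def weights_def)

lemma lam_simple: "lam \<bullet> simple i \<ge> 0"
proof -
  have "lam \<bullet> coroot (simple i) \<ge> 0" using dom by (auto simp: dominant_weights_def)
  moreover have "simple i \<bullet> simple i > 0" using simple_nz by simp
  ultimately show ?thesis by (simp add: coroot_inner inner_commute zero_le_divide_iff)
qed

lemma lam_simple0_iff: "lam \<bullet> coroot (simple i) = 0 \<longleftrightarrow> lam \<bullet> simple i = 0"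
  using simple_nz[of i] by (simp add: coroot_inner)

lemma lam_pos: "\<alpha> \<in> pos \<Longrightarrow> lam \<bullet> \<alpha> \<ge> 0"
  by (subst inner_cf) (auto intro!: sum_nonneg simp: pos_cf_nonneg lam_simple)

lemma lam_negpos: "- \<alpha> \<in> pos \<Longrightarrow> lam \<bullet> \<alpha> \<le> 0"
  using lam_pos[of "-\<alpha>"] by simp

lemma pos_of_lam: assumes "\<alpha> \<in> R" "lam \<bullet> \<alpha> > 0" shows "\<alpha> \<in> pos"
proof (rule ccontr)
  assume "\<alpha> \<notin> pos" hence "- \<alpha> \<in> pos" using R_cases assms(1) by blast
  hence "lam \<bullet> \<alpha> \<le> 0" by (rule lam_negpos)
  thus False using assms(2) by linarith
qed

lemma neg_of_lam: assumes "\<alpha> \<in> R" "lam \<bullet> \<alpha> < 0" shows "- \<alpha> \<in> pos"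
proof (rule ccontr)
  assume "- \<alpha> \<notin> pos" hence "\<alpha> \<in> pos" using R_cases assms(1) by blast
  hence "lam \<bullet> \<alpha> \<ge> 0" by (rule lam_pos)
  thus False using assms(2) by linarith
qed

lemma lam_zero_cf: "\<alpha> \<in> pos \<Longrightarrow> lam \<bullet> \<alpha> = 0 \<Longrightarrow> cf \<alpha> i > 0 \<Longrightarrow> lam \<bullet> simple i = 0"
proof -
  assume a: "\<alpha> \<in> pos" "lam \<bullet> \<alpha> = 0" "cf \<alpha> i > 0"
  have s0: "(\<Sum>i\<in>UNIV. cf \<alpha> i * (lam \<bullet> simple i)) = 0"
    by (subst inner_cf[symmetric]) (rule a(2))
  have nn: "\<And>j. j \<in> UNIV \<Longrightarrow> 0 \<le> cf \<alpha> j * (lam \<bullet> simple j)"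
    by (rule mult_nonneg_nonneg[OF pos_cf_nonneg[OF a(1)] lam_simple])
  have "\<forall>j\<in>UNIV. cf \<alpha> j * (lam \<bullet> simple j) = 0" using iffD1[OF sum_nonneg_eq_0_iff[OF finite nn] s0] .
  hence "cf \<alpha> i * (lam \<bullet> simple i) = 0" by blast
  thus ?thesis using a(3) by simp
qed

lemma w0_weyl: "w0 \<in> weyl simple" using w0 by (simp add: is_longest_def)

lemma w0_simple_neg: "- w0 (simple i) \<in> pos"
proof (rule ccontr)
  assume "\<not> ?thesis"
  hence "w0 (simple i) \<in> pos" using R_cases[OF weyl_R[OF w0_weyl simple_R]] by blast
  hence "wlen simple (w0 \<circ> refl (simple i)) = Suc (wlen simple w0)" by (rule wlen_snoc_pos[OF w0_weyl])
  moreover have "w0 \<circ> refl (simple i) \<in> weyl simple"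
    using weyl_comp[OF w0_weyl word_weyl[of "[i]"]] by simp
  moreover have "\<forall>y\<in>weyl simple. wlen simple y \<le> wlen simple w0" using w0 by (simp add: is_longest_def)
  ultimately show False by fastforce
qed

lemma w0_neg: "\<alpha> \<in> pos \<Longrightarrow> - w0 \<alpha> \<in> pos"
  by (rule weyl_neg_of_simple[OF w0_weyl]) (simp_all add: w0_simple_neg)

lemma w0_orth: "orth w0" using weyl_orth[OF w0_weyl] .

lemma w0_invol: "w0 (w0 x) = x"
proof -
  have h: "w0 \<circ> w0 = id"
  proof (rule inv_empty_id)
    show "w0 \<circ> w0 \<in> weyl simple" using weyl_comp[OF w0_weyl w0_weyl] .
    show "\<forall>\<alpha>\<in>pos. (w0 \<circ> w0) \<alpha> \<in> pos"
    proof
      fix \<alpha> assume "\<alpha> \<in> pos"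
      hence "- w0 (- w0 \<alpha>) \<in> pos" by (intro w0_neg)
      thus "(w0 \<circ> w0) \<alpha> \<in> pos" by (simp add: orth_neg[OF w0_orth])
    qed
  qed
  have "(w0 \<circ> w0) x = id x" by (simp only: h)
  thus ?thesis by simp
qed

lemma w0_sym: "w0 x \<bullet> y = x \<bullet> w0 y"
proof -
  have "w0 x \<bullet> y = w0 x \<bullet> w0 (w0 y)" by (simp add: w0_invol)
  also have "\<dots> = x \<bullet> w0 y" by (rule orth_inner[OF w0_orth])
  finally show ?thesis .
qed

lemma w0_R: "\<alpha> \<in> R \<Longrightarrow> w0 \<alpha> \<in> R" using weyl_R[OF w0_weyl] .

lemma lm_pos: "\<alpha> \<in> pos \<Longrightarrow> lm \<bullet> \<alpha> \<le> 0"
proof -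
  assume a: "\<alpha> \<in> pos"
  have "lm \<bullet> \<alpha> = lam \<bullet> w0 \<alpha>" by (rule w0_sym)
  thus ?thesis using lam_negpos[OF w0_neg[OF a]] by simp
qed

lemma lm_weight: "\<alpha> \<in> R \<Longrightarrow> lm \<bullet> coroot \<alpha> \<in> \<int>"
proof -
  assume a: "\<alpha> \<in> R"
  have "lm \<bullet> coroot \<alpha> = lam \<bullet> coroot (w0 \<alpha>)" by (simp only: w0_sym orth_coroot[OF w0_orth])
  thus ?thesis using lam_weight[OF w0_R[OF a]] by simp
qed

lemma v_weyl: "v \<in> weyl simple" by (rule word_weyl)
lemma v_orth: "orth v" by (rule orth_w)
lemma v_lam: "v lam = lm" using v_min(1) .

lemma v_simple_S: "lam \<bullet> simple i = 0 \<Longrightarrow> v (simple i) \<in> pos"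
proof (rule ccontr)
  assume l: "lam \<bullet> simple i = 0" and n: "v (simple i) \<notin> pos"
  hence neg: "- v (simple i) \<in> pos" using word_simple_cases by blast
  have "refl (simple i) lam = lam" using l by (simp add: refl_def coroot_inner)
  hence "(v \<circ> refl (simple i)) lam = lm" by (simp add: v_lam)
  moreover have "v \<circ> refl (simple i) \<in> weyl simple" unfolding word_snoc[symmetric] by (rule word_weyl)
  ultimately have "wlen simple v \<le> wlen simple (v \<circ> refl (simple i))" using v_min(2) by blast
  thus False using wlen_snoc_neg[OF v_weyl neg] by simp
qed

lemma v_S: assumes a: "\<alpha> \<in> pos" and b: "lam \<bullet> \<alpha> = 0" shows "v \<alpha> \<in> pos"
  by (rule weyl_pos_of_simple[OF v_weyl a]) (use v_simple_S lam_zero_cf[OF a b] in blast)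

lemma v_nonS: "\<alpha> \<in> pos \<Longrightarrow> lam \<bullet> \<alpha> > 0 \<Longrightarrow> - v \<alpha> \<in> pos"
proof -
  assume a: "\<alpha> \<in> pos" "lam \<bullet> \<alpha> > 0"
  have "lm \<bullet> v \<alpha> = lam \<bullet> \<alpha>" using orth_inner[OF v_orth, of lam \<alpha>] v_lam by simp
  hence "v \<alpha> \<notin> pos" using a(2) lm_pos[of "v \<alpha>"] by linarith
  thus ?thesis using R_cases[OF word_R[OF pos_R[OF a(1)]]] by blast
qed

lemma invs_v: "invs v = {\<alpha> \<in> pos. lam \<bullet> \<alpha> > 0}"
proof (intro set_eqI iffI)
  fix \<alpha> assume "\<alpha> \<in> invs v"
  hence a: "\<alpha> \<in> pos" "- v \<alpha> \<in> pos" by (auto simp: invs_def)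
  have "lam \<bullet> \<alpha> \<noteq> 0" using v_S[OF a(1)] a(2) pos_not_neg by blast
  thus "\<alpha> \<in> {\<alpha> \<in> pos. lam \<bullet> \<alpha> > 0}" using lam_pos[OF a(1)] a(1) by simp
next
  fix \<alpha> assume "\<alpha> \<in> {\<alpha> \<in> pos. lam \<bullet> \<alpha> > 0}"
  thus "\<alpha> \<in> invs v" using v_nonS by (simp add: invs_def)
qed

lemma M_card: "M = card {\<alpha> \<in> pos. lam \<bullet> \<alpha> > 0}"
  using reduced_card[OF v_red] invs_v by simp

lemma wS_sub: "\<exists>ws'. set ws' \<subseteq> {i. lam \<bullet> coroot (simple i) = 0} \<and> word simple ws' = wS"
  using w0S by (auto simp: is_longest_def weyl_sub_def)

lemma word_fix_lam: "set ws' \<subseteq> {i. lam \<bullet> coroot (simple i) = 0} \<Longrightarrow> word simple ws' lam = lam"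
  by (induction ws') (auto simp: refl_def)

lemma wS_lam: "wS lam = lam"
proof -
  obtain ws' where "set ws' \<subseteq> {i. lam \<bullet> coroot (simple i) = 0}" "word simple ws' = wS" using wS_sub by blast
  thus ?thesis using word_fix_lam[of ws'] by simp
qed

lemma wS_weyl: "wS \<in> weyl simple" by (rule word_weyl)
lemma wS_orth: "orth wS" by (rule orth_w)

lemma wS_simple_S: "lam \<bullet> simple i = 0 \<Longrightarrow> - wS (simple i) \<in> pos"
proof (rule ccontr)
  assume l: "lam \<bullet> simple i = 0" and n: "- wS (simple i) \<notin> pos"
  hence p: "wS (simple i) \<in> pos" using word_simple_cases by blast
  obtain ws' where ws': "set ws' \<subseteq> {i. lam \<bullet> coroot (simple i) = 0}" "word simple ws' = wS"
    using wS_sub by blast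
  have "wS \<circ> refl (simple i) = word simple (ws' @ [i])" using ws' by (simp add: word_snoc)
  moreover have "set (ws' @ [i]) \<subseteq> {i. lam \<bullet> coroot (simple i) = 0}" using ws' l lam_simple0_iff by auto
  ultimately have "wS \<circ> refl (simple i) \<in> weyl_sub simple {i. lam \<bullet> coroot (simple i) = 0}"
    unfolding weyl_sub_def by blast
  hence "wlen simple (wS \<circ> refl (simple i)) \<le> wlen simple wS" using w0S by (simp add: is_longest_def)
  thus False using wlen_snoc_pos[OF wS_weyl p] by simp
qed

lemma wS_S: assumes a: "\<alpha> \<in> pos" and b: "lam \<bullet> \<alpha> = 0" shows "- wS \<alpha> \<in> pos"
  by (rule weyl_neg_of_simple[OF wS_weyl a]) (use wS_simple_S lam_zero_cf[OF a b] in blast)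

lemma wS_inner: "lam \<bullet> wS \<alpha> = lam \<bullet> \<alpha>"
  using orth_inner[OF wS_orth, of lam \<alpha>] wS_lam by simp

lemma wS_nonS: "\<alpha> \<in> pos \<Longrightarrow> lam \<bullet> \<alpha> > 0 \<Longrightarrow> wS \<alpha> \<in> pos"
  by (rule pos_of_lam[OF word_R[OF pos_R]]) (simp_all add: wS_inner)

lemma invs_wS: "invs wS = {\<alpha> \<in> pos. lam \<bullet> \<alpha> = 0}"
proof (intro set_eqI iffI)
  fix \<alpha> assume "\<alpha> \<in> invs wS"
  hence a: "\<alpha> \<in> pos" "- wS \<alpha> \<in> pos" by (auto simp: invs_def)
  have "\<not> lam \<bullet> \<alpha> > 0" using wS_nonS[OF a(1)] a(2) pos_not_neg by blast
  thus "\<alpha> \<in> {\<alpha> \<in> pos. lam \<bullet> \<alpha> = 0}" using lam_pos[OF a(1)] a(1) by simp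
next
  fix \<alpha> assume "\<alpha> \<in> {\<alpha> \<in> pos. lam \<bullet> \<alpha> = 0}"
  hence "\<alpha> \<in> pos" "lam \<bullet> \<alpha> = 0" by auto
  thus "\<alpha> \<in> invs wS" unfolding invs_def using wS_S by blast
qed

lemma w0_eq: "v \<circ> wS = w0"
proof -
  have "w0 \<circ> (v \<circ> wS) = id"
  proof (rule inv_empty_id)
    show "w0 \<circ> (v \<circ> wS) \<in> weyl simple" using weyl_comp[OF w0_weyl weyl_comp[OF v_weyl wS_weyl]] .
    show "\<forall>\<alpha>\<in>pos. (w0 \<circ> (v \<circ> wS)) \<alpha> \<in> pos"
    proof
      fix \<alpha> assume a: "\<alpha> \<in> pos"
      show "(w0 \<circ> (v \<circ> wS)) \<alpha> \<in> pos"
      proof (cases "lam \<bullet> \<alpha> = 0")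
        case True
        let ?g = "- wS \<alpha>"
        have g: "?g \<in> pos" using wS_S[OF a True] .
        have "lam \<bullet> ?g = 0" using True wS_inner[of \<alpha>] by simp
        hence "v ?g \<in> pos" using v_S[OF g] by blast
        hence "- w0 (v ?g) \<in> pos" by (rule w0_neg)
        moreover have "- w0 (v ?g) = (w0 \<circ> (v \<circ> wS)) \<alpha>"
          by (simp add: orth_neg[OF w0_orth] orth_neg[OF v_orth])
        ultimately show ?thesis by simp
      next
        case False
        hence lp: "lam \<bullet> \<alpha> > 0" using lam_pos[OF a] by simp
        have p1: "wS \<alpha> \<in> pos" using wS_nonS[OF a lp] .
        have "lam \<bullet> wS \<alpha> > 0" using lp wS_inner[of \<alpha>] by simp
        hence "- v (wS \<alpha>) \<in> pos" using v_nonS[OF p1] by blast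
        hence "- w0 (- v (wS \<alpha>)) \<in> pos" by (rule w0_neg)
        moreover have "- w0 (- v (wS \<alpha>)) = (w0 \<circ> (v \<circ> wS)) \<alpha>"
          by (simp add: orth_neg[OF w0_orth])
        ultimately show ?thesis by simp
      qed
    qed
  qed
  note h = this
  show ?thesis
  proof
    fix x
    have "w0 (v (wS x)) = x" using fun_cong[OF h, of x] by simp
    hence "w0 (w0 (v (wS x))) = w0 x" by simp
    thus "(v \<circ> wS) x = w0 x" by (simp add: w0_invol)
  qed
qed

lemma word_ws: "word simple (ws1 @ ws2) = w0" using w0_eq by (simp add: word_append)

lemma invs_w0: "invs w0 = pos" using w0_neg by (auto simp: invs_def)

lemma card_split: "card pos = card {\<alpha> \<in> pos. lam \<bullet> \<alpha> > 0} + card {\<alpha> \<in> pos. lam \<bullet> \<alpha> = 0}"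
proof -
  have "card ({\<alpha> \<in> pos. lam \<bullet> \<alpha> > 0} \<union> {\<alpha> \<in> pos. lam \<bullet> \<alpha> = 0})
      = card {\<alpha> \<in> pos. lam \<bullet> \<alpha> > 0} + card {\<alpha> \<in> pos. lam \<bullet> \<alpha> = 0}"
    by (rule card_Un_disjoint) (auto simp: pos_finite)
  moreover have "{\<alpha> \<in> pos. lam \<bullet> \<alpha> > 0} \<union> {\<alpha> \<in> pos. lam \<bullet> \<alpha> = 0} = pos"
    using lam_pos by (auto simp: less_eq_real_def)
  ultimately show ?thesis by simp
qed

lemma ws_reduced: "reduced_word simple (ws1 @ ws2)"
proof -
  have "length (ws1 @ ws2) = card pos"
    using reduced_card[OF v_red] reduced_card[OF w0S_red] invs_v invs_wS card_split by simp
  also have "\<dots> = wlen simple w0" using wlen_card[OF w0_weyl] invs_w0 by simp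
  finally show ?thesis by (simp add: reduced_word_def word_ws)
qed

abbreviation "bs \<equiv> fin_betas simple (ws1 @ ws2)"
abbreviation "N \<equiv> length (ws1 @ ws2)"

lemma bs_set: "set bs = pos" using reduced_betas_set[OF ws_reduced] word_ws invs_w0 by simp
lemma word_split_apply: "\<forall>i. s i \<noteq> 0 \<Longrightarrow> word s (A @ [x] @ D) (word s (rev D) (s x)) = - word s A (s x)"
  by (simp add: word_append word_inv_rev refl_self orth_neg[OF orth_word])

lemma bs_distinct: "distinct bs" using reduced_betas_distinct[OF ws_reduced] .
lemma bs_len: "length bs = N" by simp

lemma bs_tail: "M \<le> j \<Longrightarrow> j < N \<Longrightarrow> bs ! j = fin_betas simple ws2 ! (j - M)"
proof -
  assume j: "M \<le> j" "j < N"
  hence "j - M < length ws2" by simp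
  thus ?thesis unfolding fin_betas_def using j by (simp add: nth_append Suc_diff_le)
qed

lemma bs_tail_lam: "M \<le> j \<Longrightarrow> j < N \<Longrightarrow> lam \<bullet> (bs ! j) = 0"
proof -
  assume j: "M \<le> j" "j < N"
  have "fin_betas simple ws2 ! (j - M) \<in> set (fin_betas simple ws2)" using j by simp
  thus ?thesis using bs_tail[OF j] reduced_betas_set[OF w0S_red] invs_wS by auto
qed

lemma bs_pos: "j < N \<Longrightarrow> bs ! j \<in> pos" using bs_set nth_mem bs_len by metis

lemma bs_head_lam: "j < M \<Longrightarrow> lam \<bullet> (bs ! j) > 0"
proof (rule ccontr)
  assume j: "j < M" and n: "\<not> lam \<bullet> (bs ! j) > 0"
  hence jN: "j < N" by simp
  hence "lam \<bullet> (bs ! j) = 0" using n lam_pos[OF bs_pos[OF jN]] by linarith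
  hence "bs ! j \<in> set (fin_betas simple ws2)"
    using reduced_betas_set[OF w0S_red] invs_wS bs_pos[OF jN] by simp
  then obtain k where k: "k < length ws2" "fin_betas simple ws2 ! k = bs ! j"
    by (metis in_set_conv_nth length_fin_betas)
  have "bs ! (M + k) = bs ! j" using bs_tail[of "M+k"] k by simp
  moreover have "M + k < N" "M + k \<noteq> j" using k j by auto
  moreover have "M + k < length bs" "j < length bs" using k jN by simp_all
  ultimately show False using nth_eq_iff_index_eq[OF bs_distinct] by blast
qed

lemma bs_cover: "\<alpha> \<in> pos \<Longrightarrow> lam \<bullet> \<alpha> > 0 \<Longrightarrow> \<exists>j < M. bs ! j = \<alpha>"
proof -
  assume a: "\<alpha> \<in> pos" "lam \<bullet> \<alpha> > 0"
  then obtain j where j: "j < N" "bs ! j = \<alpha>" using bs_set by (metis in_set_conv_nth bs_len)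
  have "j < M"
  proof (rule ccontr)
    assume "\<not> j < M" hence "lam \<bullet> (bs ! j) = 0" using bs_tail_lam[of j] j(1) by simp
    thus False using a(2) j(2) by simp
  qed
  thus ?thesis using j by blast
qed

lemma w0_bs: "j < N \<Longrightarrow> w0 (bs ! j) = - word simple (take j (ws1 @ ws2)) (simple ((ws1 @ ws2) ! j))"
proof -
  assume j: "j < N"
  let ?ws = "ws1 @ ws2"
  have ws: "?ws = take j ?ws @ [?ws ! j] @ drop (Suc j) ?ws" using id_take_nth_drop[OF j] by simp
  have b: "bs ! j = word simple (rev (drop (Suc j) ?ws)) (simple (?ws ! j))"
    using j by (simp add: fin_betas_def)
  have "w0 (bs ! j) = word simple ?ws (word simple (rev (drop (Suc j) ?ws)) (simple (?ws ! j)))"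
    by (simp only: b word_ws[symmetric])
  also have "\<dots> = - word simple (take j ?ws) (simple (?ws ! j))"
    by (subst (1) ws) (rule word_split_apply[OF simple_nz_all])
  finally show ?thesis .
qed

end


lemma ext_elt_apply[simp]: "ext_elt v \<nu> (x, r) = (v x, r - \<nu> \<bullet> x)"
  by (simp add: ext_elt_def)

lemma ext_elt_apply': "ext_elt v \<nu> p = (v (fst p), snd p - \<nu> \<bullet> fst p)"
  by (cases p) simp

definition asref :: "'a::euclidean_space \<times> real \<Rightarrow> 'a \<times> real \<Rightarrow> 'a \<times> real" where
  "asref b p = (fst p - (fst p \<bullet> coroot (fst b)) *\<^sub>R fst b, snd p - (fst p \<bullet> coroot (fst b)) * snd b)"

lemma asref_self: "fst b \<noteq> 0 \<Longrightarrow> asref b b = - b"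
  by (cases b) (simp add: asref_def coroot_self scaleR_2 algebra_simps)

lemma asref_invol: "fst b \<noteq> 0 \<Longrightarrow> asref b (asref b p) = p"
  by (cases b; cases p) (simp add: asref_def inner_diff_left coroot_self algebra_simps)

lemma asref_conj:
  assumes o: "orth v"
  shows "ext_elt v \<nu> (asref b p) = asref (ext_elt v \<nu> b) (ext_elt v \<nu> p)"
proof (cases b; cases p)
  fix y c x r assume b: "b = (y, c)" and p: "p = (x, r)"
  have k: "v x \<bullet> coroot (v y) = x \<bullet> coroot y" by (simp add: orth_coroot[OF o] orth_inner[OF o])
  show ?thesis unfolding b p asref_def
    by (simp add: k orth_diff[OF o] orth_scale[OF o] inner_diff_right algebra_simps)
qed

lemma ext_elt_neg: "orth v \<Longrightarrow> ext_elt v \<nu> (- p) = - ext_elt v \<nu> p"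
  by (cases p) (simp add: orth_neg)

lemma ext_elt_comp0: "ext_elt v 0 \<circ> ext_elt w 0 = ext_elt (v \<circ> w) 0"
  by (auto simp: fun_eq_iff ext_elt_def)

lemma ext_elt_inj0: "orth v \<Longrightarrow> ext_elt v 0 p = ext_elt v 0 q \<Longrightarrow> p = q"
  by (cases p; cases q) (auto dest: orth_inj)

lemma aword_Nil[simp]: "aword s \<phi> [] = id" by (simp add: aword_def)
lemma aword_Cons[simp]: "aword s \<phi> (j # l) = aff_refl s \<phi> j \<circ> aword s \<phi> l" by (simp add: aword_def)
lemma aword_append: "aword s \<phi> (a @ b) = aword s \<phi> a \<circ> aword s \<phi> b"
  by (induction a) auto

lemma scal_coroot: "(x \<bullet> a) *\<^sub>R coroot a = (x \<bullet> coroot a) *\<^sub>R a"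
  by (simp add: coroot_def)

lemma aff_refl_asref:
  assumes "\<forall>i. s i \<noteq> 0" "\<phi> \<noteq> 0"
  shows "aff_refl s \<phi> j = asref (aff_simple_root s \<phi> j)"
proof (cases j)
  case None
  show ?thesis
  proof
    fix p show "aff_refl s \<phi> j p = asref (aff_simple_root s \<phi> j) p"
      using assms(2) unfolding None
      by (cases p) (simp add: aff_refl_def aff_simple_root_def asref_def refl_def coroot_neg coroot_coroot
          scal_coroot inner_commute)
  qed
next
  case (Some i)
  have nz: "s i \<noteq> 0" using assms(1) by blast
  show ?thesis
  proof
    fix p show "aff_refl s \<phi> j p = asref (aff_simple_root s \<phi> j) p"
      using nz unfolding Some
      by (cases p) (simp add: aff_refl_def aff_simple_root_def asref_def refl_def coroot_coroot
          scal_coroot inner_commute)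
  qed
qed

lemma aff_simple_root_nz: "\<forall>i. s i \<noteq> 0 \<Longrightarrow> \<phi> \<noteq> 0 \<Longrightarrow> fst (aff_simple_root s \<phi> j) \<noteq> 0"
  by (cases j) (auto simp: aff_simple_root_def coroot_nz)

lemma aff_refl_invol: "\<forall>i. s i \<noteq> 0 \<Longrightarrow> \<phi> \<noteq> 0 \<Longrightarrow> aff_refl s \<phi> j (aff_refl s \<phi> j p) = p"
  by (simp add: aff_refl_asref asref_invol aff_simple_root_nz)

lemma aff_refl_self: "\<forall>i. s i \<noteq> 0 \<Longrightarrow> \<phi> \<noteq> 0 \<Longrightarrow> aff_refl s \<phi> j (aff_simple_root s \<phi> j) = - aff_simple_root s \<phi> j"
  by (simp add: aff_refl_asref asref_self aff_simple_root_nz)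

lemma aff_refl_neg: "\<forall>i. s i \<noteq> 0 \<Longrightarrow> \<phi> \<noteq> 0 \<Longrightarrow> aff_refl s \<phi> j (- p) = - aff_refl s \<phi> j p"
  by (cases j) (auto simp: aff_refl_def intro!: ext_elt_neg orth_refl)

lemma aword_neg: "\<forall>i. s i \<noteq> 0 \<Longrightarrow> \<phi> \<noteq> 0 \<Longrightarrow> aword s \<phi> l (- p) = - aword s \<phi> l p"
  by (induction l arbitrary: p) (auto simp: aff_refl_neg)

lemma aword_inv_rev: "\<forall>i. s i \<noteq> 0 \<Longrightarrow> \<phi> \<noteq> 0 \<Longrightarrow> aword s \<phi> l (aword s \<phi> (rev l) p) = p"
proof (induction l arbitrary: p rule: rev_induct)
  case (snoc x l)
  thus ?case by (simp add: aword_append aff_refl_invol)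
qed simp

lemma aword_split_apply:
  "\<forall>i. s i \<noteq> 0 \<Longrightarrow> \<phi> \<noteq> 0 \<Longrightarrow>
   aword s \<phi> (A @ [x] @ D) (aword s \<phi> (rev D) (aff_simple_root s \<phi> x)) = - aword s \<phi> A (aff_simple_root s \<phi> x)"
  by (simp add: aword_append aword_inv_rev aff_refl_self aword_neg)

lemma transl_apply[simp]: "transl \<nu> (x, r) = (x, r - \<nu> \<bullet> x)"
  by (simp add: transl_def)



context RS begin

lemma coroot_pos_mult: "\<alpha> \<in> R \<Longrightarrow> l \<bullet> coroot \<alpha> = (2 / (\<alpha> \<bullet> \<alpha>)) * (l \<bullet> \<alpha>) \<and> 2 / (\<alpha> \<bullet> \<alpha>) > 0"
  using R_nz by (simp add: coroot_inner)

lemma coroot_sign_pos: "\<alpha> \<in> R \<Longrightarrow> l \<bullet> coroot \<alpha> > 0 \<longleftrightarrow> l \<bullet> \<alpha> > 0"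
proof -
  assume a: "\<alpha> \<in> R"
  have c: "2 / (\<alpha> \<bullet> \<alpha>) > 0" and e: "l \<bullet> coroot \<alpha> = (2 / (\<alpha> \<bullet> \<alpha>)) * (l \<bullet> \<alpha>)"
    using coroot_pos_mult[OF a, of l] by auto
  show ?thesis
  proof
    assume "l \<bullet> coroot \<alpha> > 0"
    hence "0 < (2 / (\<alpha> \<bullet> \<alpha>)) * (l \<bullet> \<alpha>)" by (simp only: e)
    thus "l \<bullet> \<alpha> > 0" using zero_less_mult_pos c by blast
  next
    assume "l \<bullet> \<alpha> > 0"
    hence "0 < (2 / (\<alpha> \<bullet> \<alpha>)) * (l \<bullet> \<alpha>)" using c by (rule mult_pos_pos[rotated])
    thus "l \<bullet> coroot \<alpha> > 0" by (simp only: e)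
  qed
qed

lemma coroot_sign_nonpos: "\<alpha> \<in> R \<Longrightarrow> l \<bullet> coroot \<alpha> \<le> 0 \<longleftrightarrow> l \<bullet> \<alpha> \<le> 0"
  using coroot_sign_pos[of \<alpha> l] by linarith

lemma aff_pos_iff:
  assumes a: "\<alpha> \<in> R"
  shows "(coroot \<alpha>, of_int k) \<in> aff_pos R simple \<longleftrightarrow> (k > 0 \<or> k = 0 \<and> \<alpha> \<in> pos)"
proof
  assume "(coroot \<alpha>, of_int k) \<in> aff_pos R simple"
  then obtain \<alpha>' k' where e: "(coroot \<alpha>, (of_int k :: real)) = (coroot \<alpha>', of_int k')" "\<alpha>' \<in> R"
      "k' > 0 \<or> (k' = 0 \<and> \<alpha>' \<in> pos)"
    by (auto simp: aff_pos_def pos_def)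
  hence "\<alpha>' = \<alpha>" "k' = k" using coroot_inj R_nz a by auto
  thus "k > 0 \<or> k = 0 \<and> \<alpha> \<in> pos" using e(3) by simp
next
  assume "k > 0 \<or> k = 0 \<and> \<alpha> \<in> pos"
  thus "(coroot \<alpha>, of_int k) \<in> aff_pos R simple" using a by (auto simp: aff_pos_def pos_def)
qed

lemma aff_pos_elem: "\<beta> \<in> aff_pos R simple \<Longrightarrow> \<exists>\<alpha> k. \<alpha> \<in> R \<and> \<beta> = (coroot \<alpha>, of_int k) \<and> (k > 0 \<or> k = 0 \<and> \<alpha> \<in> pos)"
  by (auto simp: aff_pos_def pos_def)

lemma aff_neg_iff:
  assumes a: "\<alpha> \<in> R"
  shows "(coroot \<alpha>, of_int k) \<in> aff_neg R simple \<longleftrightarrow> (- k > 0 \<or> k = 0 \<and> - \<alpha> \<in> pos)"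
proof -
  have "(coroot \<alpha>, of_int k) \<in> aff_neg R simple \<longleftrightarrow> - (coroot \<alpha>, of_int k) \<in> aff_pos R simple"
    unfolding aff_neg_def using image_eqI[of "(coroot \<alpha>, of_int k)" uminus "- (coroot \<alpha>, of_int k)"] by auto
  also have "- (coroot \<alpha>, (of_int k :: real)) = (coroot (- \<alpha>), of_int (- k))" by (simp add: coroot_neg)
  also have "\<dots> \<in> aff_pos R simple \<longleftrightarrow> (- k > 0 \<or> - k = 0 \<and> - \<alpha> \<in> pos)"
    by (rule aff_pos_iff[OF neg_R[OF a]])
  finally show ?thesis by simp
qed

end

locale Setup2 = Setup R simple lam w0 ws1 ws2
  for R :: "'a::euclidean_space set" and simple :: "'i::finite \<Rightarrow> 'a" and lam w0 ws1 ws2 +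
  fixes \<phi> :: 'a and u :: "'a \<times> real \<Rightarrow> 'a \<times> real" and ls :: "'i option list"
  assumes phi: "highest_short_root R simple \<phi>"
    and u: "u \<in> Omega R simple"
    and t_expr: "transl (w0 lam) = u \<circ> aword simple \<phi> ls"
    and t_red: "length ls = alen R simple (transl (w0 lam))"
    and sorted: "sorted_wrt (aff_prec simple (ws1 @ ws2) (w0 lam) w0) (aff_betas simple \<phi> ls)"
    and exhaust: "set (aff_betas simple \<phi> ls) =
       {\<beta> \<in> aff_pos R simple. transl (w0 lam) \<beta> \<in> aff_neg R simple}"
begin

abbreviation "bl \<equiv> aff_betas simple \<phi> ls"
abbreviation "I \<equiv> {\<beta> \<in> aff_pos R simple. transl lm \<beta> \<in> aff_neg R simple}"
abbreviation "asr \<equiv> aff_simple_root simple \<phi>"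

definition P1 :: "'a \<times> real \<Rightarrow> real" where "P1 \<beta> = fst (Phi lm w0 \<beta>)"
definition g :: "nat \<Rightarrow> 'a \<times> real" where "g j = (w0 (coroot (bs ! j)), lam \<bullet> coroot (bs ! j))"

lemma phi_R: "\<phi> \<in> R" using phi by (simp add: highest_short_root_def)
lemma phi_nz: "\<phi> \<noteq> 0" using phi_R R_nz by blast

lemma u_form: "\<exists>vu \<nu>u. u = ext_elt vu \<nu>u \<and> vu \<in> weyl simple"
  using u by (auto simp: Omega_def ext_weyl_def)

lemma u_neg: "u (- p) = - u p"
proof -
  obtain vu \<nu>u where "u = ext_elt vu \<nu>u" "vu \<in> weyl simple" using u_form by blast
  thus ?thesis using ext_elt_neg[OF weyl_orth] by simp
qed

lemma u_conj: "u (asref b p) = asref (u b) (u p)"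
proof -
  obtain vu \<nu>u where "u = ext_elt vu \<nu>u" "vu \<in> weyl simple" using u_form by blast
  thus ?thesis using asref_conj[OF weyl_orth] by simp
qed

lemma bl_len[simp]: "length bl = length ls" by (simp add: aff_betas_def)

lemma bl_nth: "k < length ls \<Longrightarrow> bl ! k = aword simple \<phi> (rev (drop (Suc k) ls)) (asr (ls ! k))"
  by (simp add: aff_betas_def)

lemma t_bl: "k < length ls \<Longrightarrow> transl lm (bl ! k) = - u (aword simple \<phi> (take k ls) (asr (ls ! k)))"
proof -
  assume k: "k < length ls"
  have ls: "ls = take k ls @ [ls ! k] @ drop (Suc k) ls" using id_take_nth_drop[OF k] by simp
  have "transl lm (bl ! k) = u (aword simple \<phi> ls (aword simple \<phi> (rev (drop (Suc k) ls)) (asr (ls ! k))))"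
    by (simp only: bl_nth[OF k] t_expr comp_apply)
  also have "\<dots> = u (- aword simple \<phi> (take k ls) (asr (ls ! k)))"
    by (subst (1) ls) (simp only: aword_split_apply[OF simple_nz_all phi_nz])
  also have "\<dots> = - u (aword simple \<phi> (take k ls) (asr (ls ! k)))" by (rule u_neg)
  finally show ?thesis .
qed

lemma lm_int: "\<alpha> \<in> R \<Longrightarrow> \<exists>m. lm \<bullet> coroot \<alpha> = of_int m"
proof -
  assume a: "\<alpha> \<in> R"
  from lm_weight[OF a] show ?thesis by (auto elim!: Ints_cases)
qed

lemma lm_coroot_pos: "\<alpha> \<in> pos \<Longrightarrow> lm \<bullet> coroot \<alpha> \<le> 0"
  using coroot_sign_nonpos[OF pos_R] lm_pos by blast

lemma I_elem:
  assumes b: "\<beta> \<in> I"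
  shows "\<exists>\<alpha> k. \<alpha> \<in> R \<and> \<beta> = (coroot \<alpha>, of_int k) \<and> 0 < k \<and> of_int k \<le> lm \<bullet> coroot \<alpha>"
proof -
  obtain \<alpha> k where a: "\<alpha> \<in> R" "\<beta> = (coroot \<alpha>, of_int k)" "k > 0 \<or> k = 0 \<and> \<alpha> \<in> pos"
    using aff_pos_elem b by blast
  obtain m where m: "lm \<bullet> coroot \<alpha> = of_int m" using lm_int[OF a(1)] by blast
  have e: "transl lm \<beta> = (coroot \<alpha>, of_int (k - m))" using a(2) m by simp
  have "transl lm \<beta> \<in> aff_neg R simple" using b by simp
  hence "(coroot \<alpha>, of_int (k - m)) \<in> aff_neg R simple" by (simp only: e)
  hence "- (k - m) > 0 \<or> k - m = 0 \<and> - \<alpha> \<in> pos" using aff_neg_iff[OF a(1)] by blast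
  moreover have "\<not> (k = 0 \<and> \<alpha> \<in> pos)"
  proof
    assume k: "k = 0 \<and> \<alpha> \<in> pos"
    hence "m \<le> 0" using lm_coroot_pos m by fastforce
    thus False using k calculation pos_not_neg by auto
  qed
  ultimately have "k > 0" "k \<le> m" using a(3) by auto
  thus ?thesis using a m by auto
qed

lemma P1_def': "P1 \<beta> = (lm \<bullet> fst \<beta> - snd \<beta>) / (lm \<bullet> fst \<beta>)"
  by (simp add: P1_def Phi_def)

lemma P1_nonneg: "\<beta> \<in> I \<Longrightarrow> P1 \<beta> \<ge> 0"
proof -
  assume "\<beta> \<in> I"
  then obtain \<alpha> k where a: "\<beta> = (coroot \<alpha>, of_int k)" "0 < k" "of_int k \<le> lm \<bullet> coroot \<alpha>"
    using I_elem by blast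
  thus ?thesis by (simp add: P1_def')
qed

lemma lam_coroot_int: "\<alpha> \<in> R \<Longrightarrow> \<exists>m. lam \<bullet> coroot \<alpha> = of_int m"
proof -
  assume a: "\<alpha> \<in> R"
  from lam_weight[OF a] show ?thesis by (auto elim!: Ints_cases)
qed

lemma g_alt: "j < M \<Longrightarrow> g j = (coroot (w0 (bs ! j)), lam \<bullet> coroot (bs ! j))"
  by (simp add: g_def orth_coroot[OF w0_orth])

lemma lm_w0: "lm \<bullet> w0 x = lam \<bullet> x"
  using orth_inner[OF w0_orth] by simp

lemma g_transl: "j < M \<Longrightarrow> transl lm (g j) = (w0 (coroot (bs ! j)), 0)"
  by (simp add: g_def lm_w0)

lemma g_snd: "j < M \<Longrightarrow> snd (Phi lm w0 (g j)) = bs ! j"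
proof -
  assume j: "j < M"
  have "bs ! j \<in> R" using bs_pos[of j] j pos_R by simp
  thus ?thesis by (simp add: Phi_def g_def w0_invol coroot_coroot R_nz)
qed

lemma g_inj: "j < M \<Longrightarrow> k < M \<Longrightarrow> g j = g k \<Longrightarrow> j = k"
proof -
  assume jk: "j < M" "k < M" "g j = g k"
  hence "bs ! j = bs ! k" using g_snd[of j] g_snd[of k] by simp
  moreover have "j < length bs" "k < length bs" using jk by simp_all
  ultimately show "j = k" using nth_eq_iff_index_eq[OF bs_distinct] by blast
qed

lemma g_I: "j < M \<Longrightarrow> g j \<in> I"
proof -
  assume j: "j < M"
  let ?b = "bs ! j"
  have bp: "?b \<in> pos" using bs_pos j by simp
  have bR: "?b \<in> R" using bp pos_R by blast
  have lb: "lam \<bullet> ?b > 0" using bs_head_lam j by blast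
  obtain m where m: "lam \<bullet> coroot ?b = of_int m" using lam_coroot_int[OF bR] by blast
  have mp: "m > 0" using coroot_sign_pos[OF bR, of lam] lb m by simp
  have aR: "w0 ?b \<in> R" using w0_R bR by blast
  have g: "g j = (coroot (w0 ?b), of_int m)" using g_alt[OF j] m by simp
  have "g j \<in> aff_pos R simple" using g aff_pos_iff[OF aR] mp by simp
  moreover have "transl lm (g j) = (coroot (w0 ?b), of_int 0)"
    using g_transl[OF j] by (simp add: orth_coroot[OF w0_orth])
  moreover have "(coroot (w0 ?b), of_int 0) \<in> aff_neg R simple"
    using aff_neg_iff[OF aR, of 0] w0_neg[OF bp] by simp
  ultimately show ?thesis by simp
qed

lemma g_P1: "j < M \<Longrightarrow> P1 (g j) = 0"
  by (simp add: P1_def' g_def lm_w0)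

lemma P1_zero:
  assumes b: "\<beta> \<in> I" and z: "P1 \<beta> = 0"
  shows "\<exists>j<M. \<beta> = g j"
proof -
  obtain \<alpha> k where a: "\<alpha> \<in> R" "\<beta> = (coroot \<alpha>, of_int k)" "0 < k" "of_int k \<le> lm \<bullet> coroot \<alpha>"
    using I_elem[OF b] by blast
  have n: "lm \<bullet> coroot \<alpha> = of_int k" using z a by (simp add: P1_def')
  let ?b = "w0 \<alpha>"
  have bR: "?b \<in> R" using w0_R a(1) by blast
  have "lam \<bullet> coroot ?b = of_int k" using n by (simp add: orth_coroot[OF w0_orth] w0_sym)
  hence "lam \<bullet> coroot ?b > 0" using a(3) by simp
  hence lb: "lam \<bullet> ?b > 0" using coroot_sign_pos[OF bR] by blast
  hence "?b \<in> pos" using pos_of_lam bR by blast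
  then obtain j where j: "j < M" "bs ! j = ?b" using bs_cover lb by blast
  have "g j = (coroot \<alpha>, of_int k)"
    using j \<open>lam \<bullet> coroot ?b = of_int k\<close> by (simp add: g_alt w0_invol)
  thus ?thesis using j a(2) by auto
qed

lemma bl_distinct: "distinct bl"
proof (rule card_distinct)
  have "card (set bl) = card I" using exhaust by simp
  also have "\<dots> = length ls" using t_red by (simp add: alen_def)
  finally show "card (set bl) = length bl" by simp
qed

lemma bl_I: "i < length ls \<Longrightarrow> bl ! i \<in> I"
  using exhaust nth_mem[of i bl] by simp

lemma prec_nth: "i < j \<Longrightarrow> j < length ls \<Longrightarrow>
   P1 (bl ! i) < P1 (bl ! j) \<or> (P1 (bl ! i) = P1 (bl ! j) \<and>
     fin_succ simple (ws1 @ ws2) (snd (Phi lm w0 (bl ! i))) (snd (Phi lm w0 (bl ! j))))"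
  using sorted sorted_wrt_iff_nth_less[of _ bl] by (simp add: aff_prec_def P1_def)

lemma strict_mono_id:
  assumes "\<And>i. i < n \<Longrightarrow> f i < (n::nat)" "\<And>i j. i < j \<Longrightarrow> j < n \<Longrightarrow> f i < f j"
  shows "i < n \<Longrightarrow> f i = i"
proof -
  have ge: "\<And>i. i < n \<Longrightarrow> i \<le> f i"
  proof -
    fix i show "i < n \<Longrightarrow> i \<le> f i"
    proof (induction i)
      case (Suc i) thus ?case using assms(2)[of i "Suc i"] by simp
    qed simp
  qed
  have le: "\<And>k. k < n \<Longrightarrow> f (n - 1 - k) \<le> n - 1 - k"
  proof -
    fix k show "k < n \<Longrightarrow> f (n - 1 - k) \<le> n - 1 - k"
    proof (induction k)
      case 0 thus ?case using assms(1)[of "n - 1"] by simp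
    next
      case (Suc k)
      hence "f (n - 1 - Suc k) < f (n - 1 - k)" using assms(2)[of "n - 1 - Suc k" "n - 1 - k"] by simp
      thus ?case using Suc by simp
    qed
  qed
  assume i: "i < n"
  have "f (n - 1 - (n - 1 - i)) \<le> n - 1 - (n - 1 - i)" using le[of "n - 1 - i"] i by simp
  thus ?thesis using ge[OF i] i by simp
qed

lemma fin_succ_bs: "fin_succ simple (ws1 @ ws2) (bs ! a) (bs ! b) \<Longrightarrow> a < N \<Longrightarrow> b < N \<Longrightarrow> a < b"
proof -
  assume f: "fin_succ simple (ws1 @ ws2) (bs ! a) (bs ! b)" and ab: "a < N" "b < N"
  then obtain j k where jk: "j < k" "k < N" "bs ! j = bs ! a" "bs ! k = bs ! b"
    by (auto simp: fin_succ_def)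
  have "j = a" using nth_eq_iff_index_eq[OF bs_distinct, of j a] jk ab by simp
  moreover have "k = b" using nth_eq_iff_index_eq[OF bs_distinct, of k b] jk ab by simp
  ultimately show ?thesis using jk by simp
qed

lemma head_g: "M \<le> length ls \<and> (\<forall>i<M. bl ! i = g i)"
proof -
  define Z where "Z = {i. i < length ls \<and> P1 (bl ! i) = 0}"
  have Zfin: "finite Z" by (simp add: Z_def)
  have down: "\<And>i j. i < j \<Longrightarrow> j \<in> Z \<Longrightarrow> i \<in> Z"
  proof -
    fix i j assume ij: "i < j" "j \<in> Z"
    hence jl: "j < length ls" "P1 (bl ! j) = 0" by (auto simp: Z_def)
    have "P1 (bl ! i) \<ge> 0" using bl_I ij jl P1_nonneg by simp
    thus "i \<in> Z" using prec_nth[OF ij(1) jl(1)] jl ij by (auto simp: Z_def)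
  qed
  have img: "(\<lambda>i. bl ! i) ` Z = g ` {..<M}"
  proof
    show "(\<lambda>i. bl ! i) ` Z \<subseteq> g ` {..<M}"
    proof
      fix x assume "x \<in> (\<lambda>i. bl ! i) ` Z"
      then obtain i where i: "i < length ls" "P1 (bl ! i) = 0" "x = bl ! i" by (auto simp: Z_def)
      obtain j where "j < M" "bl ! i = g j" using P1_zero[OF bl_I[OF i(1)] i(2)] by blast
      thus "x \<in> g ` {..<M}" using i(3) by blast
    qed
    show "g ` {..<M} \<subseteq> (\<lambda>i. bl ! i) ` Z"
    proof
      fix x assume "x \<in> g ` {..<M}"
      then obtain j where j: "j < M" "x = g j" by blast
      have "x \<in> set bl" using g_I[OF j(1)] exhaust j(2) by simp
      then obtain i where i: "i < length ls" "bl ! i = x" by (metis in_set_conv_nth bl_len)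
      have "P1 (bl ! i) = 0" using i j g_P1 by simp
      thus "x \<in> (\<lambda>i. bl ! i) ` Z" using i by (auto simp: Z_def)
    qed
  qed
  have "inj_on (\<lambda>i. bl ! i) Z"
    using bl_distinct by (auto simp: inj_on_def Z_def nth_eq_iff_index_eq)
  moreover have "inj_on g {..<M}" using g_inj by (auto simp: inj_on_def)
  ultimately have cZ: "card Z = M"
  proof -
    assume i1: "inj_on (\<lambda>i. bl ! i) Z" and i2: "inj_on g {..<M}"
    have "card Z = card ((\<lambda>i. bl ! i) ` Z)" using card_image[OF i1] by simp
    also have "\<dots> = card (g ` {..<M})" by (simp only: img)
    also have "\<dots> = M" using card_image[OF i2] by simp
    finally show ?thesis .
  qed
  have sub: "{..<M} \<subseteq> Z"
  proof
    fix i assume i: "i \<in> {..<M}"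
    show "i \<in> Z"
    proof (rule ccontr)
      assume n: "i \<notin> Z"
      have "Z \<subseteq> {..<i}"
      proof
        fix j assume j: "j \<in> Z"
        show "j \<in> {..<i}"
        proof (rule ccontr)
          assume "j \<notin> {..<i}" hence "i < j \<or> i = j" by auto
          thus False using down[of i j] j n by auto
        qed
      qed
      hence "card Z \<le> i" using card_mono[of "{..<i}" Z] by simp
      thus False using cZ i by simp
    qed
  qed
  have Ml: "M \<le> length ls"
  proof (rule ccontr)
    assume "\<not> M \<le> length ls"
    hence "length ls \<in> Z" using sub by auto
    thus False by (simp add: Z_def)
  qed
  define \<sigma> where "\<sigma> i = (SOME j. j < M \<and> bl ! i = g j)" for i
  have \<sigma>: "\<And>i. i < M \<Longrightarrow> \<sigma> i < M \<and> bl ! i = g (\<sigma> i)"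
  proof -
    fix i assume i: "i < M"
    hence "bl ! i \<in> g ` {..<M}" using img sub by blast
    hence "\<exists>j. j < M \<and> bl ! i = g j" by auto
    thus "\<sigma> i < M \<and> bl ! i = g (\<sigma> i)" unfolding \<sigma>_def by (rule someI_ex)
  qed
  have mono: "\<And>i j. i < j \<Longrightarrow> j < M \<Longrightarrow> \<sigma> i < \<sigma> j"
  proof -
    fix i j assume ij: "i < j" "j < M"
    have jl: "j < length ls" using ij Ml by simp
    have "i \<in> Z" "j \<in> Z" using subsetD[OF sub, of i] subsetD[OF sub, of j] ij by simp_all
    hence z: "P1 (bl ! i) = 0" "P1 (bl ! j) = 0" by (simp_all add: Z_def)
    have "fin_succ simple (ws1 @ ws2) (snd (Phi lm w0 (bl ! i))) (snd (Phi lm w0 (bl ! j)))"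
      using prec_nth[OF ij(1) jl] z by simp
    hence "fin_succ simple (ws1 @ ws2) (bs ! \<sigma> i) (bs ! \<sigma> j)"
      using \<sigma>[of i] \<sigma>[of j] ij g_snd by simp
    thus "\<sigma> i < \<sigma> j" using fin_succ_bs \<sigma>[of i] \<sigma>[of j] ij by simp
  qed
  have "\<forall>i<M. \<sigma> i = i" using strict_mono_id[of M \<sigma>] \<sigma> mono by blast
  thus ?thesis using Ml \<sigma> by auto
qed

end


context Setup2 begin

lemma M_le: "M \<le> length ls" using head_g by blast
lemma bl_g: "k < M \<Longrightarrow> bl ! k = g k" using head_g by blast

lemma w0_coroot_bs: "k < M \<Longrightarrow> w0 (coroot (bs ! k)) = - word simple (take k ws1) (coroot (simple (ws1 ! k)))"
proof -
  assume k: "k < M"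
  have "w0 (coroot (bs ! k)) = coroot (w0 (bs ! k))" by (simp add: orth_coroot[OF w0_orth])
  also have "\<dots> = coroot (- word simple (take k (ws1 @ ws2)) (simple ((ws1 @ ws2) ! k)))"
    using w0_bs[of k] k by simp
  also have "\<dots> = - word simple (take k ws1) (coroot (simple (ws1 ! k)))"
    using k by (simp add: coroot_neg orth_coroot[OF orth_w] nth_append)
  finally show ?thesis .
qed

lemma step_u_root:
  assumes k: "k < M" and ih: "u \<circ> aword simple \<phi> (take k ls) = ext_elt (word simple (take k ws1)) 0 \<circ> u"
  shows "u (asr (ls ! k)) = (coroot (simple (ws1 ! k)), 0)"
proof -
  let ?W = "word simple (take k ws1)"
  let ?c = "coroot (simple (ws1 ! k))"
  let ?a = "asr (ls ! k)"
  have kl: "k < length ls" using k M_le by simp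
  have "- u (aword simple \<phi> (take k ls) ?a) = transl lm (bl ! k)" using t_bl[OF kl] by simp
  also have "\<dots> = (w0 (coroot (bs ! k)), 0)" using bl_g[OF k] g_transl[OF k] by simp
  also have "\<dots> = (- ?W ?c, 0)" using w0_coroot_bs[OF k] by simp
  finally have e: "- u (aword simple \<phi> (take k ls) ?a) = (- ?W ?c, 0)" .
  have "u (aword simple \<phi> (take k ls) ?a) = ext_elt ?W 0 (u ?a)" using fun_cong[OF ih, of ?a] by simp
  hence "ext_elt ?W 0 (u ?a) = (?W ?c, 0)" using e by (metis add.inverse_inverse minus_zero uminus_Pair)
  also have "\<dots> = ext_elt ?W 0 (?c, 0)" by simp
  finally show ?thesis using ext_elt_inj0[OF orth_w] by blast
qed

lemma step_conj:
  assumes k: "k < M" and ih: "u \<circ> aword simple \<phi> (take k ls) = ext_elt (word simple (take k ws1)) 0 \<circ> u"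
  shows "u \<circ> aff_refl simple \<phi> (ls ! k) = aff_refl simple \<phi> (Some (ws1 ! k)) \<circ> u"
proof
  fix p
  have r: "u (asr (ls ! k)) = asr (Some (ws1 ! k))"
    using step_u_root[OF k ih] by (simp add: aff_simple_root_def)
  have "(u \<circ> aff_refl simple \<phi> (ls ! k)) p = u (asref (asr (ls ! k)) p)"
    by (simp add: aff_refl_asref[OF simple_nz_all phi_nz])
  also have "\<dots> = asref (u (asr (ls ! k))) (u p)" by (rule u_conj)
  also have "\<dots> = aff_refl simple \<phi> (Some (ws1 ! k)) (u p)"
    by (simp add: r aff_refl_asref[OF simple_nz_all phi_nz])
  finally show "(u \<circ> aff_refl simple \<phi> (ls ! k)) p = (aff_refl simple \<phi> (Some (ws1 ! k)) \<circ> u) p" by simp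
qed

lemma goalA_ind: "k \<le> M \<Longrightarrow> u \<circ> aword simple \<phi> (take k ls) = ext_elt (word simple (take k ws1)) 0 \<circ> u"
proof (induction k)
  case 0
  show ?case by (auto simp: fun_eq_iff ext_elt_def)
next
  case (Suc k)
  hence k: "k < M" by simp
  have ih: "u \<circ> aword simple \<phi> (take k ls) = ext_elt (word simple (take k ws1)) 0 \<circ> u"
    by (rule Suc.IH) (use k in simp)
  have kl: "k < length ls" using k M_le by simp
  have t1: "take (Suc k) ls = take k ls @ [ls ! k]" using take_Suc_conv_app_nth[OF kl] .
  have t2: "take (Suc k) ws1 = take k ws1 @ [ws1 ! k]" by (rule take_Suc_conv_app_nth) (use k in simp)
  show ?case
  proof
    fix p
    have "(u \<circ> aword simple \<phi> (take (Suc k) ls)) p = u (aword simple \<phi> (take k ls) (aff_refl simple \<phi> (ls ! k) p))"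
      by (simp add: t1 aword_append)
    also have "\<dots> = ext_elt (word simple (take k ws1)) 0 (u (aff_refl simple \<phi> (ls ! k) p))"
      using fun_cong[OF ih] by simp
    also have "\<dots> = ext_elt (word simple (take k ws1)) 0 (aff_refl simple \<phi> (Some (ws1 ! k)) (u p))"
      using fun_cong[OF step_conj[OF k ih]] by simp
    also have "\<dots> = (ext_elt (word simple (take (Suc k) ws1)) 0 \<circ> u) p"
      by (cases "u p") (simp add: t2 word_snoc aff_refl_def)
    finally show "(u \<circ> aword simple \<phi> (take (Suc k) ls)) p = (ext_elt (word simple (take (Suc k) ws1)) 0 \<circ> u) p" .
  qed
qed

lemma goalA: "k < M \<Longrightarrow> u \<circ> aff_refl simple \<phi> (ls ! k) = aff_refl simple \<phi> (Some (ws1 ! k)) \<circ> u"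
  using step_conj goalA_ind by simp

abbreviation "m \<equiv> u \<circ> aword simple \<phi> (drop M ls)"

lemma m_eq: "m = transl lam \<circ> ext_elt (word simple (rev ws1)) 0"
proof
  fix p :: "'a \<times> real"
  obtain x r where p: "p = (x, r)" by (cases p)
  have sp: "aword simple \<phi> ls = aword simple \<phi> (take M ls) \<circ> aword simple \<phi> (drop M ls)"
    using aword_append[of simple \<phi> "take M ls" "drop M ls"] by simp
  have "transl lm p = u (aword simple \<phi> (take M ls) (aword simple \<phi> (drop M ls) p))"
    using t_expr sp by simp
  also have "\<dots> = ext_elt v 0 (m p)"
    using fun_cong[OF goalA_ind[OF order_refl], of "aword simple \<phi> (drop M ls) p"] by simp
  finally have e: "transl lm p = ext_elt v 0 (m p)" by simp
  have "m p = ext_elt (word simple (rev ws1)) 0 (ext_elt v 0 (m p))"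
    by (cases "m p") (simp add: word_rev_inv[OF simple_nz_all])
  also have "\<dots> = ext_elt (word simple (rev ws1)) 0 (transl lm p)" by (simp only: e)
  also have "\<dots> = (word simple (rev ws1) x, r - lm \<bullet> x)" by (simp add: p)
  also have "lm \<bullet> x = lam \<bullet> word simple (rev ws1) x"
    using word_adj[OF simple_nz_all, of ws1 lam x] v_lam by simp
  finally show "m p = (transl lam \<circ> ext_elt (word simple (rev ws1)) 0) p" by (simp add: p)
qed

end


lemma card_K: "card {k::int. lo \<le> k \<and> (k < n \<or> k = n \<and> Q)} = nat (n - lo) + (if Q \<and> lo \<le> n then 1 else 0)"
proof (cases "Q \<and> lo \<le> n")
  case True
  hence "{k::int. lo \<le> k \<and> (k < n \<or> k = n \<and> Q)} = {lo..n}" by auto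
  moreover have "nat (n - lo + 1) = nat (n - lo) + 1" using True by (simp add: nat_add_distrib)
  ultimately show ?thesis using True by simp
next
  case False
  hence "{k::int. lo \<le> k \<and> (k < n \<or> k = n \<and> Q)} = {lo..<n}" by auto
  thus ?thesis using False by simp
qed

lemma floor_Ints: "x \<in> \<int> \<Longrightarrow> of_int \<lfloor>x\<rfloor> = (x::real)"
  by (auto elim!: Ints_cases)

context RS begin

lemma R_split: "R = pos \<union> uminus ` pos"
proof
  show "R \<subseteq> pos \<union> uminus ` pos"
  proof
    fix a assume "a \<in> R"
    hence "a \<in> pos \<or> - a \<in> pos" using R_cases by blast
    thus "a \<in> pos \<union> uminus ` pos" using image_eqI[of a uminus "- a" pos] by auto
  qed
  show "pos \<union> uminus ` pos \<subseteq> R" using pos_R neg_R by auto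
qed

lemma R_sum: "(\<Sum>a\<in>R. f a) = (\<Sum>a\<in>pos. f a) + (\<Sum>a\<in>pos. f (- a))"
proof -
  have d: "pos \<inter> uminus ` pos = {}" using pos_not_neg by auto
  have "(\<Sum>a\<in>R. f a) = (\<Sum>a\<in>pos \<union> uminus ` pos. f a)" by (rule arg_cong[OF R_split])
  also have "\<dots> = (\<Sum>a\<in>pos. f a) + (\<Sum>a\<in>uminus ` pos. f a)"
    by (rule sum.union_disjoint) (use pos_finite d in auto)
  also have "(\<Sum>a\<in>uminus ` pos. f a) = (\<Sum>a\<in>pos. f (- a))"
    by (subst sum.reindex) (auto simp: inj_on_def)
  finally show ?thesis .
qed

lemma alen_formula:
  assumes w: "w \<in> weyl simple" and hR: "\<forall>\<alpha>\<in>R. h (coroot \<alpha>) \<in> \<int>" and hneg: "\<forall>x. h (- x) = - h x"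
    and y: "\<forall>x r. y (x, r) = (w x, r - h x)"
  shows "alen R simple y = (\<Sum>\<alpha>\<in>pos. nat \<lfloor>h (coroot \<alpha>)\<rfloor>
      + (if - w \<alpha> \<in> pos \<and> 0 \<le> \<lfloor>h (coroot \<alpha>)\<rfloor> then 1 else 0)
      + nat (- \<lfloor>h (coroot \<alpha>)\<rfloor> - 1)
      + (if w \<alpha> \<in> pos \<and> 1 \<le> - \<lfloor>h (coroot \<alpha>)\<rfloor> then 1 else 0))"
proof -
  have o: "orth w" using weyl_orth[OF w] .
  define n where "n \<beta> = \<lfloor>h (coroot \<beta>)\<rfloor>" for \<beta>
  have hn: "\<And>\<beta>. \<beta> \<in> R \<Longrightarrow> h (coroot \<beta>) = of_int (n \<beta>)"
    using hR floor_Ints by (simp add: n_def)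
  define K where "K \<beta> = {k::int. (if \<beta> \<in> pos then 0 else 1) \<le> k \<and> (k < n \<beta> \<or> k = n \<beta> \<and> - w \<beta> \<in> pos)}" for \<beta>
  define f where "f = (\<lambda>(\<beta>::'a, k::int). (coroot \<beta>, real_of_int k))"
  let ?Y = "{p \<in> aff_pos R simple. y p \<in> aff_neg R simple}"
  have yc: "\<And>\<beta> k. \<beta> \<in> R \<Longrightarrow> y (coroot \<beta>, of_int k) = (coroot (w \<beta>), of_int (k - n \<beta>))"
    using y hn by (simp add: orth_coroot[OF o])
  have condK: "\<And>\<beta> (k::int). \<beta> \<in> R \<Longrightarrow> (k > 0 \<or> k = 0 \<and> \<beta> \<in> pos) \<longleftrightarrow> (if \<beta> \<in> pos then 0 else 1) \<le> k"
    by auto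
  have Yeq: "?Y = f ` (SIGMA \<beta>:R. K \<beta>)"
  proof
    show "?Y \<subseteq> f ` (SIGMA \<beta>:R. K \<beta>)"
    proof
      fix p assume p: "p \<in> ?Y"
      then obtain \<beta> k where b: "\<beta> \<in> R" "p = (coroot \<beta>, of_int k)" "k > 0 \<or> k = 0 \<and> \<beta> \<in> pos"
        using aff_pos_elem by blast
      have "(coroot (w \<beta>), of_int (k - n \<beta>)) \<in> aff_neg R simple" using p b yc by simp
      hence "- (k - n \<beta>) > 0 \<or> k - n \<beta> = 0 \<and> - w \<beta> \<in> pos"
        using aff_neg_iff[OF weyl_R[OF w b(1)]] by blast
      hence "k \<in> K \<beta>" using b(3) condK[OF b(1)] by (auto simp: K_def)
      thus "p \<in> f ` (SIGMA \<beta>:R. K \<beta>)" using b by (auto simp: f_def intro!: image_eqI[of _ _ "(\<beta>, k)"])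
    qed
    show "f ` (SIGMA \<beta>:R. K \<beta>) \<subseteq> ?Y"
    proof
      fix p assume "p \<in> f ` (SIGMA \<beta>:R. K \<beta>)"
      then obtain \<beta> k where b: "\<beta> \<in> R" "k \<in> K \<beta>" "p = (coroot \<beta>, of_int k)" by (auto simp: f_def)
      have c1: "k > 0 \<or> k = 0 \<and> \<beta> \<in> pos" using b(2) condK[OF b(1)] by (auto simp: K_def)
      have c2: "- (k - n \<beta>) > 0 \<or> k - n \<beta> = 0 \<and> - w \<beta> \<in> pos" using b(2) by (auto simp: K_def)
      have "p \<in> aff_pos R simple" using b aff_pos_iff[OF b(1)] c1 by simp
      moreover have "y p \<in> aff_neg R simple"
      proof -
        have yp: "y p = (coroot (w \<beta>), of_int (k - n \<beta>))" unfolding b(3) by (rule yc[OF b(1)])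
        have "(coroot (w \<beta>), of_int (k - n \<beta>)) \<in> aff_neg R simple"
          using aff_neg_iff[OF weyl_R[OF w b(1)], of "k - n \<beta>"] c2 by blast
        thus ?thesis by (simp only: yp)
      qed
      ultimately show "p \<in> ?Y" by simp
    qed
  qed
  have inj: "inj_on f (SIGMA \<beta>:R. K \<beta>)"
  proof (rule inj_onI)
    fix a b assume a: "a \<in> (SIGMA \<beta>:R. K \<beta>)" and b: "b \<in> (SIGMA \<beta>:R. K \<beta>)" and e: "f a = f b"
    obtain a1 a2 b1 b2 where ab: "a = (a1, a2)" "b = (b1, b2)" by (cases a, cases b)
    have "coroot a1 = coroot b1" "real_of_int a2 = of_int b2" using e ab by (auto simp: f_def)
    moreover have "a1 \<in> R" "b1 \<in> R" using a b ab by auto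
    ultimately show "a = b" using ab coroot_inj R_nz by auto
  qed
  have finK: "\<And>\<beta>. finite (K \<beta>)"
  proof -
    fix \<beta> have "K \<beta> \<subseteq> {0..n \<beta>}" by (auto simp: K_def split: if_splits)
    thus "finite (K \<beta>)" using finite_subset by blast
  qed
  have "alen R simple y = card ?Y" by (simp add: alen_def)
  also have "\<dots> = card (SIGMA \<beta>:R. K \<beta>)" unfolding Yeq using card_image[OF inj] .
  also have "\<dots> = (\<Sum>\<beta>\<in>R. card (K \<beta>))" using card_SigmaI[of R K] R_finite finK by simp
  also have "\<dots> = (\<Sum>\<alpha>\<in>pos. card (K \<alpha>) + card (K (- \<alpha>)))" by (subst R_sum) (simp only: sum.distrib)
  also have "\<dots> = (\<Sum>\<alpha>\<in>pos. nat \<lfloor>h (coroot \<alpha>)\<rfloor>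
      + (if - w \<alpha> \<in> pos \<and> 0 \<le> \<lfloor>h (coroot \<alpha>)\<rfloor> then 1 else 0)
      + nat (- \<lfloor>h (coroot \<alpha>)\<rfloor> - 1)
      + (if w \<alpha> \<in> pos \<and> 1 \<le> - \<lfloor>h (coroot \<alpha>)\<rfloor> then 1 else 0))"
  proof (rule sum.cong[OF refl])
    fix \<alpha> assume a: "\<alpha> \<in> pos"
    have na: "- \<alpha> \<notin> pos" using pos_not_neg[OF a] .
    have "n (- \<alpha>) = \<lfloor>h (coroot (- \<alpha>))\<rfloor>" by (simp add: n_def)
    also have "\<dots> = \<lfloor>- real_of_int (n \<alpha>)\<rfloor>" using hn[OF pos_R[OF a]] by (simp add: coroot_neg hneg)
    also have "\<dots> = - n \<alpha>" by (simp only: floor_uminus_of_int)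
    finally have nneg: "n (- \<alpha>) = - n \<alpha>" .
    have k1: "K \<alpha> = {k. 0 \<le> k \<and> (k < n \<alpha> \<or> k = n \<alpha> \<and> - w \<alpha> \<in> pos)}" using a by (simp add: K_def)
    have k2: "K (- \<alpha>) = {k. 1 \<le> k \<and> (k < - n \<alpha> \<or> k = - n \<alpha> \<and> w \<alpha> \<in> pos)}"
      using na nneg by (simp add: K_def orth_neg[OF o])
    show "card (K \<alpha>) + card (K (- \<alpha>)) = nat \<lfloor>h (coroot \<alpha>)\<rfloor>
      + (if - w \<alpha> \<in> pos \<and> 0 \<le> \<lfloor>h (coroot \<alpha>)\<rfloor> then 1 else 0)
      + nat (- \<lfloor>h (coroot \<alpha>)\<rfloor> - 1)
      + (if w \<alpha> \<in> pos \<and> 1 \<le> - \<lfloor>h (coroot \<alpha>)\<rfloor> then 1 else 0)"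
      unfolding k1 k2 card_K by (simp add: n_def)
  qed
  finally show ?thesis .
qed

lemma sum_abs_perm:
  fixes G :: "'a \<Rightarrow> int"
  assumes w: "w \<in> weyl simple" and gneg: "\<forall>x. G (- x) = - G x"
  shows "(\<Sum>\<alpha>\<in>pos. \<bar>G (w \<alpha>)\<bar>) = (\<Sum>\<alpha>\<in>pos. \<bar>G \<alpha>\<bar>)"
proof -
  have o: "orth w" using weyl_orth[OF w] .
  define \<pi> where "\<pi> \<alpha> = (if w \<alpha> \<in> pos then w \<alpha> else - w \<alpha>)" for \<alpha>
  have sub: "\<pi> ` pos \<subseteq> pos"
  proof
    fix b assume "b \<in> \<pi> ` pos"
    then obtain a where a: "a \<in> pos" "b = \<pi> a" by blast
    thus "b \<in> pos" using R_cases[OF weyl_R[OF w pos_R[OF a(1)]]] by (auto simp: \<pi>_def)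
  qed
  have inj: "inj_on \<pi> pos"
  proof (rule inj_onI)
    fix a b assume a: "a \<in> pos" and b: "b \<in> pos" and e: "\<pi> a = \<pi> b"
    have "w a = w b \<or> w a = - w b"
    proof (cases "w a \<in> pos"; cases "w b \<in> pos")
      assume "w a \<in> pos" "w b \<notin> pos" thus ?thesis using e by (simp add: \<pi>_def)
    next
      assume "w a \<notin> pos" "w b \<in> pos"
      hence "- w a = w b" using e by (simp add: \<pi>_def)
      hence "w a = - w b" by (metis minus_minus)
      thus ?thesis by blast
    qed (use e in \<open>auto simp: \<pi>_def\<close>)
    hence "w a = w b \<or> w a = w (- b)" by (simp add: orth_neg[OF o])
    hence "a = b \<or> a = - b" using orth_inj[OF o] by blast
    thus "a = b" using a b pos_not_neg by blast
  qed
  have img: "\<pi> ` pos = pos" using endo_inj_surj[OF pos_finite sub inj] .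
  have "(\<Sum>\<alpha>\<in>pos. \<bar>G (w \<alpha>)\<bar>) = (\<Sum>\<alpha>\<in>pos. \<bar>G (\<pi> \<alpha>)\<bar>)"
    by (rule sum.cong) (auto simp: \<pi>_def gneg)
  also have "\<dots> = (\<Sum>\<alpha>\<in>\<pi> ` pos. \<bar>G \<alpha>\<bar>)" using sum.reindex[OF inj, of "\<lambda>a. \<bar>G a\<bar>"] by simp
  also have "\<dots> = (\<Sum>\<alpha>\<in>pos. \<bar>G \<alpha>\<bar>)" by (simp only: img)
  finally show ?thesis .
qed

end


lemma sum_if_card: "finite A \<Longrightarrow> (\<Sum>a\<in>A. if P a then 1 else 0 :: int) = int (card {a\<in>A. P a})"
  by (simp add: sum.inter_filter[symmetric])

context Setup2 begin

definition NN :: "'a \<Rightarrow> int" where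
  "NN \<beta> = (if 0 \<le> lam \<bullet> coroot \<beta> then \<lfloor>lam \<bullet> coroot \<beta>\<rfloor> else - \<lfloor>- (lam \<bullet> coroot \<beta>)\<rfloor>)"

lemma N_eq: "\<beta> \<in> R \<Longrightarrow> lam \<bullet> coroot \<beta> = of_int (NN \<beta>)"
proof -
  assume b: "\<beta> \<in> R"
  have i: "lam \<bullet> coroot \<beta> \<in> \<int>" using lam_weight[OF b] .
  hence i': "- (lam \<bullet> coroot \<beta>) \<in> \<int>" by simp
  have e1: "of_int \<lfloor>lam \<bullet> coroot \<beta>\<rfloor> = lam \<bullet> coroot \<beta>" by (rule floor_Ints[OF i])
  have e2: "of_int \<lfloor>- (lam \<bullet> coroot \<beta>)\<rfloor> = - (lam \<bullet> coroot \<beta>)" by (rule floor_Ints[OF i'])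
  show ?thesis
  proof (cases "0 \<le> lam \<bullet> coroot \<beta>")
    case True
    hence q: "NN \<beta> = \<lfloor>lam \<bullet> coroot \<beta>\<rfloor>" by (simp add: NN_def)
    show ?thesis by (simp only: q e1)
  next
    case False
    hence q: "NN \<beta> = - \<lfloor>- (lam \<bullet> coroot \<beta>)\<rfloor>" by (simp add: NN_def)
    show ?thesis by (simp only: q of_int_minus e2 minus_minus)
  qed
qed

lemma N_floor: "\<beta> \<in> R \<Longrightarrow> \<lfloor>lam \<bullet> coroot \<beta>\<rfloor> = NN \<beta>"
  using N_eq by simp

lemma N_neg: "NN (- \<beta>) = - NN \<beta>"
  unfolding NN_def coroot_neg inner_minus_right by auto

lemma N_pos_iff: "\<beta> \<in> R \<Longrightarrow> NN \<beta> > 0 \<longleftrightarrow> lam \<bullet> \<beta> > 0"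
proof -
  assume b: "\<beta> \<in> R"
  have "NN \<beta> > 0 \<longleftrightarrow> lam \<bullet> coroot \<beta> > 0" using N_eq[OF b] by simp
  thus ?thesis using coroot_sign_pos[OF b] by simp
qed

lemma N_neg_iff: "\<beta> \<in> R \<Longrightarrow> NN \<beta> < 0 \<longleftrightarrow> lam \<bullet> \<beta> < 0"
proof -
  assume b: "\<beta> \<in> R"
  have "NN \<beta> < 0 \<longleftrightarrow> NN (- \<beta>) > 0" by (simp add: N_neg)
  also have "\<dots> \<longleftrightarrow> lam \<bullet> (- \<beta>) > 0" using N_pos_iff[OF neg_R[OF b]] .
  finally show ?thesis by simp
qed

lemma N_zero_iff: "\<beta> \<in> R \<Longrightarrow> NN \<beta> = 0 \<longleftrightarrow> lam \<bullet> \<beta> = 0"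
proof -
  assume b: "\<beta> \<in> R"
  have "NN \<beta> = 0 \<longleftrightarrow> \<not> NN \<beta> > 0 \<and> \<not> NN \<beta> < 0" by auto
  moreover have "lam \<bullet> \<beta> = 0 \<longleftrightarrow> \<not> lam \<bullet> \<beta> > 0 \<and> \<not> lam \<bullet> \<beta> < 0" by auto
  ultimately show ?thesis using N_pos_iff[OF b] N_neg_iff[OF b] by simp
qed

lemma N_pos_nonneg: "\<beta> \<in> pos \<Longrightarrow> NN \<beta> \<ge> 0"
proof -
  assume p: "\<beta> \<in> pos"
  have "\<not> NN \<beta> < 0" using N_neg_iff[OF pos_R[OF p]] lam_pos[OF p] by simp
  thus ?thesis by simp
qed

abbreviation "T \<equiv> (\<Sum>\<alpha>\<in>pos. NN \<alpha>)"

lemma T_abs: "T = (\<Sum>\<alpha>\<in>pos. \<bar>NN \<alpha>\<bar>)"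
  by (rule sum.cong) (auto simp: N_pos_nonneg)

lemma alen_yw:
  assumes w: "w \<in> weyl simple"
  shows "int (alen R simple (transl lam \<circ> ext_elt w 0)) =
    (\<Sum>\<alpha>\<in>pos. \<bar>NN (w \<alpha>)\<bar> - (if NN (w \<alpha>) < 0 then 1 else 0) + (if NN (w \<alpha>) = 0 \<and> - w \<alpha> \<in> pos then 1 else 0))"
proof -
  have o: "orth w" using weyl_orth[OF w] .
  have hc: "\<And>\<alpha>. lam \<bullet> w (coroot \<alpha>) = lam \<bullet> coroot (w \<alpha>)" by (simp add: orth_coroot[OF o])
  have f: "alen R simple (transl lam \<circ> ext_elt w 0) = (\<Sum>\<alpha>\<in>pos. nat \<lfloor>lam \<bullet> w (coroot \<alpha>)\<rfloor>
      + (if - w \<alpha> \<in> pos \<and> 0 \<le> \<lfloor>lam \<bullet> w (coroot \<alpha>)\<rfloor> then 1 else 0)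
      + nat (- \<lfloor>lam \<bullet> w (coroot \<alpha>)\<rfloor> - 1)
      + (if w \<alpha> \<in> pos \<and> 1 \<le> - \<lfloor>lam \<bullet> w (coroot \<alpha>)\<rfloor> then 1 else 0))"
  proof (rule alen_formula[OF w])
    show "\<forall>\<alpha>\<in>R. lam \<bullet> w (coroot \<alpha>) \<in> \<int>" using hc lam_weight weyl_R[OF w] by simp
    show "\<forall>x. lam \<bullet> w (- x) = - (lam \<bullet> w x)" by (simp add: orth_neg[OF o])
    show "\<forall>x r. (transl lam \<circ> ext_elt w 0) (x, r) = (w x, r - lam \<bullet> w x)" by simp
  qed
  show ?thesis
    unfolding f of_nat_sum
  proof (rule sum.cong[OF refl])
    fix \<alpha> assume a: "\<alpha> \<in> pos"
    have wR: "w \<alpha> \<in> R" using weyl_R[OF w pos_R[OF a]] .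
    have fl: "\<lfloor>lam \<bullet> w (coroot \<alpha>)\<rfloor> = NN (w \<alpha>)" using hc N_floor[OF wR] by simp
    have x: "w \<alpha> \<in> pos \<longleftrightarrow> \<not> - w \<alpha> \<in> pos" using R_cases[OF wR] pos_not_neg by blast
    have p: "NN (w \<alpha>) > 0 \<Longrightarrow> w \<alpha> \<in> pos" using N_pos_iff[OF wR] pos_of_lam[OF wR] by blast
    have n: "NN (w \<alpha>) < 0 \<Longrightarrow> - w \<alpha> \<in> pos" using N_neg_iff[OF wR] neg_of_lam[OF wR] by blast
    show "int (nat \<lfloor>lam \<bullet> w (coroot \<alpha>)\<rfloor>
      + (if - w \<alpha> \<in> pos \<and> 0 \<le> \<lfloor>lam \<bullet> w (coroot \<alpha>)\<rfloor> then 1 else 0)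
      + nat (- \<lfloor>lam \<bullet> w (coroot \<alpha>)\<rfloor> - 1)
      + (if w \<alpha> \<in> pos \<and> 1 \<le> - \<lfloor>lam \<bullet> w (coroot \<alpha>)\<rfloor> then 1 else 0)) =
      \<bar>NN (w \<alpha>)\<bar> - (if NN (w \<alpha>) < 0 then 1 else 0) + (if NN (w \<alpha>) = 0 \<and> - w \<alpha> \<in> pos then 1 else 0)"
      unfolding fl using x p n by (cases "NN (w \<alpha>) > 0"; cases "NN (w \<alpha>) < 0") auto
  qed
qed

lemma lm_coroot_N: "\<alpha> \<in> R \<Longrightarrow> lm \<bullet> coroot \<alpha> = of_int (NN (w0 \<alpha>))"
  using N_eq[OF w0_R] by (simp add: w0_sym orth_coroot[OF w0_orth])

lemma L_eq: "int (length ls) = T"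
proof -
  have f: "alen R simple (transl lm) = (\<Sum>\<alpha>\<in>pos. nat \<lfloor>lm \<bullet> coroot \<alpha>\<rfloor>
      + (if - id \<alpha> \<in> pos \<and> 0 \<le> \<lfloor>lm \<bullet> coroot \<alpha>\<rfloor> then 1 else 0)
      + nat (- \<lfloor>lm \<bullet> coroot \<alpha>\<rfloor> - 1)
      + (if id \<alpha> \<in> pos \<and> 1 \<le> - \<lfloor>lm \<bullet> coroot \<alpha>\<rfloor> then 1 else 0))"
  proof (rule alen_formula[of id])
    show "id \<in> weyl simple" using word_weyl[of "[]"] by simp
    show "\<forall>\<alpha>\<in>R. lm \<bullet> coroot \<alpha> \<in> \<int>" using lm_weight by blast
    show "\<forall>x. lm \<bullet> - x = - (lm \<bullet> x)" by simp
    show "\<forall>x r. transl lm (x, r) = (id x, r - lm \<bullet> x)" by simp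
  qed
  have "int (length ls) = int (alen R simple (transl lm))" using t_red by simp
  also have "\<dots> = (\<Sum>\<alpha>\<in>pos. \<bar>NN (w0 \<alpha>)\<bar>)"
    unfolding f of_nat_sum
  proof (rule sum.cong[OF refl])
    fix \<alpha> assume a: "\<alpha> \<in> pos"
    have fl: "\<lfloor>lm \<bullet> coroot \<alpha>\<rfloor> = NN (w0 \<alpha>)" using lm_coroot_N[OF pos_R[OF a]] by simp
    have np: "NN (w0 \<alpha>) \<le> 0" using N_pos_iff[OF w0_R[OF pos_R[OF a]]] lam_negpos[OF w0_neg[OF a]] by linarith
    have na: "- \<alpha> \<notin> pos" using pos_not_neg[OF a] .
    show "int (nat \<lfloor>lm \<bullet> coroot \<alpha>\<rfloor>
      + (if - id \<alpha> \<in> pos \<and> 0 \<le> \<lfloor>lm \<bullet> coroot \<alpha>\<rfloor> then 1 else 0)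
      + nat (- \<lfloor>lm \<bullet> coroot \<alpha>\<rfloor> - 1)
      + (if id \<alpha> \<in> pos \<and> 1 \<le> - \<lfloor>lm \<bullet> coroot \<alpha>\<rfloor> then 1 else 0)) = \<bar>NN (w0 \<alpha>)\<bar>"
      unfolding fl using np na a by (cases "NN (w0 \<alpha>) = 0") auto
  qed
  also have "\<dots> = (\<Sum>\<alpha>\<in>pos. \<bar>NN \<alpha>\<bar>)" by (rule sum_abs_perm[OF w0_weyl]) (simp add: N_neg)
  finally show ?thesis using T_abs by simp
qed

abbreviation "v' \<equiv> word simple (rev ws1)"

lemma v'_weyl: "v' \<in> weyl simple" by (rule word_weyl)

lemma lam_v': "lam \<bullet> v' x = lm \<bullet> x"
  using word_adj[OF simple_nz_all, of ws1 lam x] v_lam by simp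

lemma v_v': "v (v' x) = x" by (rule word_inv_rev[OF simple_nz_all])
lemma v'_v: "v' (v x) = x" by (rule word_rev_inv[OF simple_nz_all])

lemma v'_zero: "\<alpha> \<in> pos \<Longrightarrow> lam \<bullet> v' \<alpha> = 0 \<Longrightarrow> v' \<alpha> \<in> pos"
proof (rule ccontr)
  assume a: "\<alpha> \<in> pos" "lam \<bullet> v' \<alpha> = 0" and n: "v' \<alpha> \<notin> pos"
  have g: "- v' \<alpha> \<in> pos" using n R_cases[OF word_R[OF pos_R[OF a(1)]]] by blast
  have "lam \<bullet> (- v' \<alpha>) = 0" using a(2) by simp
  hence "v (- v' \<alpha>) \<in> pos" using v_S[OF g] by blast
  hence "- \<alpha> \<in> pos" by (simp add: orth_neg[OF v_orth] v_v')
  thus False using pos_not_neg[OF a(1)] by simp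
qed

lemma card_lm_neg: "card {\<alpha> \<in> pos. lm \<bullet> \<alpha> < 0} = M"
proof -
  let ?A = "{\<alpha> \<in> pos. lm \<bullet> \<alpha> < 0}"
  let ?Q = "{\<beta> \<in> pos. lam \<bullet> \<beta> > 0}"
  have inj: "inj_on (\<lambda>\<alpha>. - w0 \<alpha>) ?A"
    by (rule inj_onI) (metis minus_minus w0_invol)
  have img: "(\<lambda>\<alpha>. - w0 \<alpha>) ` ?A = ?Q"
  proof
    show "(\<lambda>\<alpha>. - w0 \<alpha>) ` ?A \<subseteq> ?Q"
    proof
      fix b assume "b \<in> (\<lambda>\<alpha>. - w0 \<alpha>) ` ?A"
      then obtain a where a: "a \<in> pos" "lm \<bullet> a < 0" "b = - w0 a" by blast
      have "lam \<bullet> b = - (lm \<bullet> a)" using a(3) w0_sym[of lam a] by simp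
      thus "b \<in> ?Q" using a w0_neg by simp
    qed
    show "?Q \<subseteq> (\<lambda>\<alpha>. - w0 \<alpha>) ` ?A"
    proof
      fix b assume b: "b \<in> ?Q"
      let ?a = "- w0 b"
      have ap: "?a \<in> pos" using w0_neg b by simp
      have "lm \<bullet> ?a = - (lam \<bullet> b)" by (simp add: lm_w0)
      hence "?a \<in> ?A" using ap b by simp
      moreover have "b = - w0 ?a" by (simp add: orth_neg[OF w0_orth] w0_invol)
      ultimately show "b \<in> (\<lambda>\<alpha>. - w0 \<alpha>) ` ?A" by blast
    qed
  qed
  have "card ?A = card ?Q" using card_image[OF inj] img by simp
  thus ?thesis using M_card by simp
qed

lemma alen_m: "int (alen R simple m) = T - int M"
proof -
  have "int (alen R simple m) = int (alen R simple (transl lam \<circ> ext_elt v' 0))" using m_eq by simp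
  also have "\<dots> = (\<Sum>\<alpha>\<in>pos. \<bar>NN (v' \<alpha>)\<bar> - (if NN (v' \<alpha>) < 0 then 1 else 0) + (if NN (v' \<alpha>) = 0 \<and> - v' \<alpha> \<in> pos then 1 else 0))"
    by (rule alen_yw[OF v'_weyl])
  also have "\<dots> = (\<Sum>\<alpha>\<in>pos. \<bar>NN (v' \<alpha>)\<bar> - (if lm \<bullet> \<alpha> < 0 then 1 else 0))"
  proof (rule sum.cong[OF refl])
    fix \<alpha> assume a: "\<alpha> \<in> pos"
    have vR: "v' \<alpha> \<in> R" using word_R pos_R a by blast
    have e1: "NN (v' \<alpha>) < 0 \<longleftrightarrow> lm \<bullet> \<alpha> < 0" using N_neg_iff[OF vR] lam_v' by simp
    have e2: "NN (v' \<alpha>) = 0 \<Longrightarrow> \<not> - v' \<alpha> \<in> pos"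
      using N_zero_iff[OF vR] v'_zero[OF a] pos_not_neg by blast
    show "\<bar>NN (v' \<alpha>)\<bar> - (if NN (v' \<alpha>) < 0 then 1 else 0) + (if NN (v' \<alpha>) = 0 \<and> - v' \<alpha> \<in> pos then 1 else 0)
        = \<bar>NN (v' \<alpha>)\<bar> - (if lm \<bullet> \<alpha> < 0 then 1 else 0)" using e1 e2 by auto
  qed
  also have "\<dots> = (\<Sum>\<alpha>\<in>pos. \<bar>NN (v' \<alpha>)\<bar>) - (\<Sum>\<alpha>\<in>pos. if lm \<bullet> \<alpha> < 0 then 1 else 0)"
    by (simp add: sum_subtractf)
  also have "(\<Sum>\<alpha>\<in>pos. if lm \<bullet> \<alpha> < 0 then 1 else 0) = int M"
    using sum_if_card[OF pos_finite] card_lm_neg by simp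
  also have "(\<Sum>\<alpha>\<in>pos. \<bar>NN (v' \<alpha>)\<bar>) = T"
    using sum_abs_perm[OF v'_weyl, of NN] N_neg T_abs by simp
  finally show ?thesis .
qed

definition inPi :: "'a \<Rightarrow> bool" where
  "inPi \<delta> \<longleftrightarrow> (\<delta> \<in> pos \<and> lam \<bullet> \<delta> = 0) \<or> (- \<delta> \<in> pos \<and> lam \<bullet> \<delta> \<noteq> 0)"

lemma Pi_neg: "inPi \<delta> \<Longrightarrow> inPi (- \<delta>) \<Longrightarrow> False"
  unfolding inPi_def using pos_not_neg by fastforce

lemma v'_Pi: "\<alpha> \<in> pos \<Longrightarrow> inPi (v' \<alpha>)"
proof -
  assume a: "\<alpha> \<in> pos"
  have vR: "v' \<alpha> \<in> R" using word_R pos_R a by blast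
  have le: "lam \<bullet> v' \<alpha> \<le> 0" using lam_v' lm_pos[OF a] by simp
  show ?thesis
  proof (cases "lam \<bullet> v' \<alpha> = 0")
    case True thus ?thesis using v'_zero[OF a] by (simp add: inPi_def)
  next
    case False
    hence "lam \<bullet> v' \<alpha> < 0" using le by simp
    thus ?thesis using neg_of_lam[OF vR] by (simp add: inPi_def)
  qed
qed

lemma Pi_unique: "w \<in> weyl simple \<Longrightarrow> (\<forall>\<alpha>\<in>pos. inPi (w \<alpha>)) \<Longrightarrow> w = v'"
proof -
  assume w: "w \<in> weyl simple" and P: "\<forall>\<alpha>\<in>pos. inPi (w \<alpha>)"
  have "v \<circ> w = id"
  proof (rule inv_empty_id)
    show "v \<circ> w \<in> weyl simple" using weyl_comp[OF v_weyl w] .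
    show "\<forall>\<alpha>\<in>pos. (v \<circ> w) \<alpha> \<in> pos"
    proof
      fix \<alpha> assume a: "\<alpha> \<in> pos"
      show "(v \<circ> w) \<alpha> \<in> pos"
      proof (rule ccontr)
        assume n: "(v \<circ> w) \<alpha> \<notin> pos"
        have zR: "v (w \<alpha>) \<in> R" using word_R weyl_R[OF w pos_R[OF a]] by blast
        let ?g = "- v (w \<alpha>)"
        have g: "?g \<in> pos" using n R_cases[OF zR] by auto
        have "v' ?g = - w \<alpha>" by (simp add: orth_neg[OF orth_w] v'_v)
        hence "inPi (- w \<alpha>)" using v'_Pi[OF g] by simp
        thus False using P a Pi_neg by blast
      qed
    qed
  qed
  show "w = v'"
  proof
    fix x
    have "v (w x) = x" using fun_cong[OF \<open>v \<circ> w = id\<close>, of x] by simp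
    hence "v' (v (w x)) = v' x" by simp
    thus "w x = v' x" by (simp add: v'_v)
  qed
qed

lemma alen_lower:
  assumes w: "w \<in> weyl simple"
  shows "int (alen R simple (transl lam \<circ> ext_elt w 0)) \<ge> T - int M"
    and "int (alen R simple (transl lam \<circ> ext_elt w 0)) \<le> T - int M \<Longrightarrow> w = v'"
proof -
  have o: "orth w" using weyl_orth[OF w] .
  let ?A = "{\<alpha> \<in> pos. NN (w \<alpha>) < 0}"
  let ?B = "{\<alpha> \<in> pos. NN (w \<alpha>) = 0 \<and> - w \<alpha> \<in> pos}"
  let ?Q = "{\<beta> \<in> pos. lam \<bullet> \<beta> > 0}"
  have e: "int (alen R simple (transl lam \<circ> ext_elt w 0)) = T - int (card ?A) + int (card ?B)"
  proof -
    have "int (alen R simple (transl lam \<circ> ext_elt w 0)) =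
      (\<Sum>\<alpha>\<in>pos. \<bar>NN (w \<alpha>)\<bar>) - (\<Sum>\<alpha>\<in>pos. if NN (w \<alpha>) < 0 then 1 else 0) + (\<Sum>\<alpha>\<in>pos. if NN (w \<alpha>) = 0 \<and> - w \<alpha> \<in> pos then 1 else 0)"
      unfolding alen_yw[OF w] by (simp add: sum.distrib sum_subtractf)
    thus ?thesis using sum_if_card[OF pos_finite] sum_abs_perm[OF w, of NN] N_neg T_abs by simp
  qed
  have fin: "finite ?Q" using pos_finite by simp
  have injA: "inj_on (\<lambda>\<alpha>. - w \<alpha>) ?A" by (rule inj_onI) (use orth_inj[OF o] in auto)
  have mapA: "(\<lambda>\<alpha>. - w \<alpha>) ` ?A \<subseteq> ?Q"
  proof
    fix b assume "b \<in> (\<lambda>\<alpha>. - w \<alpha>) ` ?A"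
    then obtain a where a: "a \<in> pos" "NN (w a) < 0" "b = - w a" by blast
    have wR: "w a \<in> R" using weyl_R[OF w pos_R[OF a(1)]] .
    have "lam \<bullet> w a < 0" using N_neg_iff[OF wR] a(2) by simp
    thus "b \<in> ?Q" using neg_of_lam[OF wR] a(3) by simp
  qed
  have cA: "card ?A \<le> M" using card_inj_on_le[OF injA mapA fin] M_card by simp
  show "int (alen R simple (transl lam \<circ> ext_elt w 0)) \<ge> T - int M" using e cA by simp
  assume le: "int (alen R simple (transl lam \<circ> ext_elt w 0)) \<le> T - int M"
  have cA': "card ?A = M" and cB: "card ?B = 0" using e le cA by simp_all
  have Bempty: "?B = {}" using cB pos_finite by simp
  have imgA: "(\<lambda>\<alpha>. - w \<alpha>) ` ?A = ?Q"
    by (rule card_subset_eq[OF fin mapA]) (simp add: card_image[OF injA] cA' M_card)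
  show "w = v'"
  proof (rule Pi_unique[OF w], rule ballI)
    fix \<alpha> assume a: "\<alpha> \<in> pos"
    have wR: "w \<alpha> \<in> R" using weyl_R[OF w pos_R[OF a]] .
    show "inPi (w \<alpha>)"
    proof (cases "NN (w \<alpha>) = 0")
      case True
      hence "\<not> - w \<alpha> \<in> pos" using Bempty a by blast
      hence "w \<alpha> \<in> pos" using R_cases[OF wR] by blast
      thus ?thesis using True N_zero_iff[OF wR] by (simp add: inPi_def)
    next
      case False
      show ?thesis
      proof (cases "NN (w \<alpha>) < 0")
        case True
        hence "lam \<bullet> w \<alpha> < 0" using N_neg_iff[OF wR] by simp
        thus ?thesis using neg_of_lam[OF wR] by (simp add: inPi_def)
      next
        case False2: False
        hence "NN (w \<alpha>) > 0" using False by simp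
        hence lp: "lam \<bullet> w \<alpha> > 0" using N_pos_iff[OF wR] by simp
        hence "w \<alpha> \<in> ?Q" using pos_of_lam[OF wR] by simp
        then obtain a' where a': "a' \<in> ?A" "w \<alpha> = - w a'" using imgA by blast
        hence "w \<alpha> = w (- a')" by (simp add: orth_neg[OF o])
        hence "\<alpha> = - a'" using orth_inj[OF o] by blast
        thus ?thesis using a a' pos_not_neg by auto
      qed
    qed
  qed
qed

lemma final:
  "(let m = u \<circ> aword simple \<phi> (drop (length ws1) ls);
        C = {transl lam \<circ> ext_elt w 0 | w. w \<in> weyl simple} in
      m \<in> C \<and> (\<forall>y\<in>C. y \<noteq> m \<longrightarrow> alen R simple m < alen R simple y) \<and>
      alen R simple m = length ls - length ws1)
   \<and> (\<forall>k < length ws1. u \<circ> aff_refl simple \<phi> (ls ! k) = aff_refl simple \<phi> (Some (ws1 ! k)) \<circ> u)"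
proof -
  have mC: "m \<in> {transl lam \<circ> ext_elt w 0 | w. w \<in> weyl simple}" using m_eq v'_weyl by blast
  have minimal: "\<forall>y\<in>{transl lam \<circ> ext_elt w 0 | w. w \<in> weyl simple}. y \<noteq> m \<longrightarrow> alen R simple m < alen R simple y"
  proof (intro ballI impI)
    fix y assume y: "y \<in> {transl lam \<circ> ext_elt w 0 | w. w \<in> weyl simple}" and ne: "y \<noteq> m"
    then obtain w where w: "w \<in> weyl simple" "y = transl lam \<circ> ext_elt w 0" by blast
    show "alen R simple m < alen R simple y"
    proof (rule ccontr)
      assume "\<not> alen R simple m < alen R simple y"
      hence "int (alen R simple y) \<le> T - int M" using alen_m by simp
      hence "w = v'" using alen_lower(2)[OF w(1)] w(2) by simp
      thus False using ne w(2) m_eq by simp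
    qed
  qed
  have len: "alen R simple m = length ls - length ws1" using alen_m L_eq by simp
  show ?thesis using mC minimal len goalA by (simp add: Let_def)
qed

end

theorem lemma5p5:
  fixes R :: "'a::euclidean_space set" and simple :: "'i::finite \<Rightarrow> 'a"
    and \<phi> lam :: 'a and w0 :: "'a \<Rightarrow> 'a"
    and ws1 ws2 :: "'i list"
    and u :: "'a \<times> real \<Rightarrow> 'a \<times> real" and ls :: "'i option list"
  assumes rs: "root_system R" and irr: "irreducible_rs R"
    and simp_sys: "simple_system R simple"
    and phi: "highest_short_root R simple \<phi>"
    and dom: "lam \<in> dominant_weights R simple"
    and w0: "is_longest simple (weyl simple) w0"
    and v_min: "word simple ws1 lam = w0 lam"
      "\<forall>y\<in>weyl simple. y lam = w0 lam \<longrightarrow> wlen simple (word simple ws1) \<le> wlen simple y"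
    and v_red: "reduced_word simple ws1"
    and w0S: "is_longest simple (weyl_sub simple {i. lam \<bullet> coroot (simple i) = 0}) (word simple ws2)"
    and w0S_red: "reduced_word simple ws2"
    and u: "u \<in> Omega R simple"
    and t_expr: "transl (w0 lam) = u \<circ> aword simple \<phi> ls"
    and t_red: "length ls = alen R simple (transl (w0 lam))"
    and sorted: "sorted_wrt (aff_prec simple (ws1 @ ws2) (w0 lam) w0) (aff_betas simple \<phi> ls)"
    and exhaust: "set (aff_betas simple \<phi> ls) =
       {\<beta> \<in> aff_pos R simple. transl (w0 lam) \<beta> \<in> aff_neg R simple}"
  shows "(let m = u \<circ> aword simple \<phi> (drop (length ws1) ls);
              C = {transl lam \<circ> ext_elt w 0 | w. w \<in> weyl simple} in
            m \<in> C \<and> (\<forall>y\<in>C. y \<noteq> m \<longrightarrow> alen R simple m < alen R simple y) \<and>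
            alen R simple m = length ls - length ws1)
       \<and> (\<forall>k < length ws1. u \<circ> aff_refl simple \<phi> (ls ! k) = aff_refl simple \<phi> (Some (ws1 ! k)) \<circ> u)"
proof -
  interpret S: Setup2 R simple lam w0 ws1 ws2 \<phi> u ls
    by unfold_locales (fact rs simp_sys dom w0 v_min(1) v_min(2) v_red w0S w0S_red phi u t_expr t_red sorted exhaust)+
  show ?thesis using S.final .
qed

end
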